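(* Let $0\le r\le n$, let $A\in\mathcal{A}_{n+1,r+1}$ with $|\mathrm{lrs}(A)|=i$ and $|\mathrm{rls}(A)|=j$, fix any tiling of the rhombic diagram $\Gamma(X(A))$, and let $T(A)$ be the filling obtained by applying the fusion-exchange algorithm to $A$. Then $\mathrm{wt}(T(A))=\alpha^{n-r-i}\beta^{n-r-j}$ at $q=1$.
   Context: Words and diagrams. For $0\le r\le n$ let $B_n^r$ be the set of words $X\in\{H,L,0\}^n$ with exactly $r$ letters $L$. If $X$ has $k$ letters $H$, $r$ letters $L$ and $\ell$ letters $0$, its rhombic diagram $\Gamma(X)$ is the closed region bounded by two paths of unit steps, using the directions west (horizontal), south (vertical) and southwest (diagonal: a fixed unit vector strictly between west and south), both going from a point $P$ to a point $Q$: the northwest boundary consists of $\ell$ west steps, then $r$ southwest steps, then $k$ south steps; the southeast boundary is obtained by reading $X$ left to right and taking a west step for each $0$, a southwest step for each $L$, a south step for each $H$. A tiling of $\Gamma(X)$ is a tiling by unit rhombi of three kinds: squares (horizontal and vertical edges), tall rhombi (vertical and diagonal edges), short rhombi (horizontal and diagonal edges). A west-strip (resp. north-strip, northwest-strip) is a maximal set of tiles connected through shared vertical (resp. horizontal, diagonal) edges; each runs from an edge of the southeast boundary to an edge of the northwest boundary, and each edge of the tiling lies in exactly one strip, of the type of its direction. Each tile has two edges on its lower-right side: its east edge (vertical for squares and tall rhombi, diagonal for short rhombi) and its south edge (horizontal for squares and short rhombi, diagonal for tall rhombi); the parallel edges on its upper-left side are its west and north edges. Weight. For a filling $T$ of the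 tiles of a tiling of $\Gamma(X)$ by symbols $\alpha,\beta,q$ (tiles may be empty), $\mathrm{wt}(T)=\alpha^k\beta^\ell\cdot(\text{product of all symbols in }T)$, with $k,\ell$ the numbers of $H$'s and $0$'s in $X$. Assemblées. An assemblée of size $(m,s)$ is a collection of $s$ nonempty, pairwise disjoint, linearly ordered sets (blocks) with union $\{1,\dots,m\}$; the last element of a block is its block-end. Blocks are listed in the canonical order with decreasing block-ends, and the assemblée is identified with the concatenated word. $\mathcal{A}_{m,s}$ is the set of these. For $A\in\mathcal{A}_{n+1,r+1}$ with block-ends $b_1>\dots>b_{r+1}$: $\mathrm{lrs}(A)$ is the set of $x>b_1$ larger than every element $y>b_1$ to the right of $x$ in $A$; $\mathrm{rls}(A)$ is the set of $x<b_{r+1}$ larger than every $y<b_{r+1}$ to the left of $x$ in $A$. A non-block-end element $x$ is an increase if $x+1$ appears to the right of $x$ in $A$, and a decrease otherwise (so $n+1$, if not a block-end, is a decrease). $X(A)\in B_n^r$ is obtained from $A$ by deleting its last letter $b_{r+1}$ and replacing each increase by $H$, each decrease by $0$ and each remaining block-end by $L$. Fusion-exchange algorithm. A label is a finite, possibly empty, set of consecutive integers; for labels $E,S$ write $E\succ S$ if both are nonempty and $\min E=\max S+1$. Given $A\in\mathcal{A}_{n+1,r+1}$ and a tiling of $\Gamma(X(A))$: initially the southeast boundary edges, in order from $P$ to $Q$, receive the singleton labels of the letters of $A$ from left to right, $b_{r+1}$ omitted. Step: choose a tile whose east and south edges are labeled, say by $E$ and $S$, and whose west and north edges are not. (R I)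 If $E\succ S$ and the south edge is horizontal: west edge gets $E\cup S$, north edge gets $\emptyset$, place $\alpha$ in the tile. (R II) If $S\succ E$ and the east edge is vertical: north edge gets $E\cup S$, west edge gets $\emptyset$, place $\beta$. (R III) Otherwise: west edge gets $E$, north edge gets $S$, and place $q$ if $E\ne\emptyset$ and $S\ne\emptyset$ (else leave the tile empty). Repeat until every edge is labeled; $T(A)$ is the resulting filling. *)

theory Defs
  imports Main
begin

text \<open>Letters H, L, 0. A step of a boundary path: LZ (letter 0) = west,
  LL = southwest, LH = south.\<close>
datatype letter = LH | LL | LZ

definition nletters :: "letter \<Rightarrow> letter list \<Rightarrow> nat" where
  "nletters c X = length (filter (\<lambda>d. d = c) X)"

definition nw_word :: "letter list \<Rightarrow> letter list" where
  "nw_word X = filter (\<lambda>d. d = LZ) X @ filter (\<lambda>d. d = LL) X @ filter (\<lambda>d. d = LH) X"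

text \<open>A tile whose east and south edges are consecutive steps (east edge first, then
  south edge, reading the boundary path from P to Q) of letters a, b.
  Squares: (H,0); tall rhombi: (H,L); short rhombi: (L,0).\<close>
definition tile_ok :: "letter \<Rightarrow> letter \<Rightarrow> bool" where
  "tile_ok a b \<longleftrightarrow> (a, b) \<in> {(LH, LZ), (LH, LL), (LL, LZ)}"

definition swap_at :: "'a list \<Rightarrow> nat \<Rightarrow> 'a list" where
  "swap_at w p = w[p := w ! Suc p, Suc p := w ! p]"

text \<open>A tiling of Gamma(X), encoded as a sequence of tile placements: starting from the
  southeast boundary path, each entry p places a tile whose east and south edges are the
  p-th and (p+1)-th steps of the current path, replacing them by the tile's north and west
  edges; at the end the path must be the northwest boundary.\<close>
fun tiling_seq :: "letter list \<Rightarrow> nat list \<Rightarrow> bool" where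
  "tiling_seq w [] \<longleftrightarrow> w = nw_word w"
| "tiling_seq w (p # ps) \<longleftrightarrow>
     Suc p < length w \<and> tile_ok (w ! p) (w ! Suc p) \<and> tiling_seq (swap_at w p) ps"

text \<open>An assemblee of size (m,s), as the list of its blocks in canonical order
  (decreasing block-ends).\<close>
definition assemblees :: "nat \<Rightarrow> nat \<Rightarrow> nat list list set" where
  "assemblees m s = {bs. length bs = s \<and> (\<forall>b\<in>set bs. b \<noteq> []) \<and>
      distinct (concat bs) \<and> set (concat bs) = {1..m} \<and>
      sorted_wrt (>) (map last bs)}"

definition block_ends :: "nat list list \<Rightarrow> nat set" where
  "block_ends bs = set (map last bs)"

definition bmax :: "nat list list \<Rightarrow> nat" where
  "bmax bs = last (hd bs)"

definition bmin :: "nat list list \<Rightarrow> nat" where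
  "bmin bs = last (last bs)"

definition lrs :: "nat list list \<Rightarrow> nat set" where
  "lrs bs = (let w = concat bs in
     {x. \<exists>p < length w. w ! p = x \<and> x > bmax bs \<and>
         (\<forall>q. p < q \<and> q < length w \<and> w ! q > bmax bs \<longrightarrow> w ! q < x)})"

definition rls :: "nat list list \<Rightarrow> nat set" where
  "rls bs = (let w = concat bs in
     {x. \<exists>p < length w. w ! p = x \<and> x < bmin bs \<and>
         (\<forall>q < p. w ! q < bmin bs \<longrightarrow> w ! q < x)})"

definition is_increase :: "nat list list \<Rightarrow> nat \<Rightarrow> bool" where
  "is_increase bs x \<longleftrightarrow> x \<notin> block_ends bs \<and>
     (let w = concat bs in \<exists>p q. p < q \<and> q < length w \<and> w ! p = x \<and> w ! q = Suc x)"

definition letter_of :: "nat list list \<Rightarrow> nat \<Rightarrow> letter" where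
  "letter_of bs x = (if x \<in> block_ends bs then LL else if is_increase bs x then LH else LZ)"

definition Xword :: "nat list list \<Rightarrow> letter list" where
  "Xword bs = map (letter_of bs) (butlast (concat bs))"

datatype tsym = SAlpha | SBeta | SQ | SEmpty

definition succ_lab :: "nat set \<Rightarrow> nat set \<Rightarrow> bool" where
  "succ_lab E S \<longleftrightarrow> E \<noteq> {} \<and> S \<noteq> {} \<and> Min E = Max S + 1"

text \<open>Given east edge (letter a, label E) and south edge (letter b, label S), return
  (label of north edge, label of west edge, symbol placed in the tile).
  The south edge is horizontal iff b = 0; the east edge is vertical iff a = H.\<close>
definition fe_tile :: "letter \<Rightarrow> nat set \<Rightarrow> letter \<Rightarrow> nat set \<Rightarrow> nat set \<times> nat set \<times> tsym" where
  "fe_tile a E b S =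
     (if succ_lab E S \<and> b = LZ then ({}, E \<union> S, SAlpha)
      else if succ_lab S E \<and> a = LH then (E \<union> S, {}, SBeta)
      else (S, E, if E \<noteq> {} \<and> S \<noteq> {} then SQ else SEmpty))"

fun fe_fill :: "(letter \<times> nat set) list \<Rightarrow> nat list \<Rightarrow> tsym list" where
  "fe_fill st [] = []"
| "fe_fill st (p # ps) =
     (let (a, E) = st ! p; (b, S) = st ! Suc p; (N, W, t) = fe_tile a E b S
      in t # fe_fill (st[p := (b, N), Suc p := (a, W)]) ps)"

definition init_labels :: "nat list list \<Rightarrow> (letter \<times> nat set) list" where
  "init_labels bs = zip (Xword bs) (map (\<lambda>x. {x}) (butlast (concat bs)))"

definition sym_val :: "'a::comm_semiring_1 \<Rightarrow> 'a \<Rightarrow> 'a \<Rightarrow> tsym \<Rightarrow> 'a" where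
  "sym_val \<alpha> \<beta> q t = (case t of SAlpha \<Rightarrow> \<alpha> | SBeta \<Rightarrow> \<beta> | SQ \<Rightarrow> q | SEmpty \<Rightarrow> 1)"

definition wt :: "'a::comm_semiring_1 \<Rightarrow> 'a \<Rightarrow> 'a \<Rightarrow> letter list \<Rightarrow> tsym list \<Rightarrow> 'a" where
  "wt \<alpha> \<beta> q X T = \<alpha> ^ nletters LH X * \<beta> ^ nletters LZ X * prod_list (map (sym_val \<alpha> \<beta> q) T)"

end

theory Submission
  imports Defs
begin


fun lrsL :: "nat \<Rightarrow> nat list \<Rightarrow> nat set" where
  "lrsL b [] = {}"
| "lrsL b (x # xs) = (if b < x \<and> (\<forall>y\<in>set xs. b < y \<longrightarrow> y < x) then insert x (lrsL b xs) else lrsL b xs)"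

fun rlsL :: "nat \<Rightarrow> nat list \<Rightarrow> nat set" where
  "rlsL b [] = {}"
| "rlsL b (x # xs) = (if x < b then insert x {y \<in> rlsL b xs. x < y} else rlsL b xs)"

lemma lrsL_append: "lrsL b (xs @ ys) = {x \<in> lrsL b xs. \<forall>y\<in>set ys. b < y \<longrightarrow> y < x} \<union> lrsL b ys"
  by (induction xs) auto

lemma rlsL_append: "rlsL b (xs @ ys) = rlsL b xs \<union> {y \<in> rlsL b ys. \<forall>x\<in>set xs. x < b \<longrightarrow> x < y}"
  by (induction xs) auto

lemma lrsL_sub: "lrsL b xs \<subseteq> set xs"
  by (induction xs) auto

lemma rlsL_sub: "rlsL b xs \<subseteq> set xs"
  by (induction xs) auto

lemma lrsL_swap:
  assumes "b < x \<and> b < y \<longrightarrow> (\<exists>t\<in>set ys. b < t \<and> x < t)"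
  shows "lrsL b (xs @ x # y # ys) = lrsL b (xs @ y # x # ys)"
proof -
  have "lrsL b (x # y # ys) = lrsL b (y # x # ys)" using assms by auto
  moreover have "set (x # y # ys) = set (y # x # ys)" by auto
  ultimately show ?thesis by (simp only: lrsL_append)
qed

lemma rlsL_swap:
  assumes "x < b \<and> y < b \<longrightarrow> (\<exists>s\<in>set xs. s < b \<and> y < s)"
  shows "rlsL b (xs @ x # y # ys) = rlsL b (xs @ y # x # ys)"
  using assms unfolding rlsL_append by (auto; force)

lemma lrsL_del2:
  assumes "b < y \<longrightarrow> (\<exists>t\<in>set ys. b < t \<and> y < t)" "y < x"
  shows "lrsL b (xs @ x # y # ys) = lrsL b (xs @ x # ys)"
  using assms unfolding lrsL_append by auto

lemma rlsL_del2:
  assumes "y < x" "y < b \<longrightarrow> x < b"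
  shows "rlsL b (xs @ x # y # ys) = rlsL b (xs @ x # ys)"
  using assms unfolding rlsL_append by auto

lemma lrsL_del1:
  assumes "x < y"
  shows "lrsL b (xs @ x # y # ys) = lrsL b (xs @ y # ys)"
  using assms unfolding lrsL_append by auto

lemma rlsL_del1:
  assumes "x < y" "x < b \<longrightarrow> (\<exists>s\<in>set xs. s < b \<and> x < s)"
  shows "rlsL b (xs @ x # y # ys) = rlsL b (xs @ y # ys)"
  using assms unfolding rlsL_append by auto

lemma lrsL_mono: "lrsL b xs \<subseteq> lrsL b (a # xs)"
  by auto

lemma lrsL_nth: "lrsL b xs = {x. \<exists>p<length xs. xs!p = x \<and> b < x \<and> (\<forall>q. p < q \<and> q < length xs \<and> b < xs!q \<longrightarrow> xs!q < x)}"
proof (induction xs)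
  case Nil then show ?case by simp
next
  case (Cons a xs)
  show ?case
  proof (rule set_eqI, rule iffI)
    fix x assume x: "x \<in> lrsL b (a # xs)"
    show "x \<in> {x. \<exists>p<length (a # xs). (a # xs)!p = x \<and> b < x \<and> (\<forall>q. p < q \<and> q < length (a # xs) \<and> b < (a # xs)!q \<longrightarrow> (a # xs)!q < x)}"
    proof (cases "x = a \<and> b < a \<and> (\<forall>y\<in>set xs. b < y \<longrightarrow> y < a)")
      case True
      show ?thesis
      proof (intro CollectI exI[of _ 0] conjI allI impI)
        fix q assume q: "0 < q \<and> q < length (a # xs) \<and> b < (a # xs) ! q"
        then obtain q' where q': "q = Suc q'" by (cases q) auto
        with q have "xs ! q' \<in> set xs" "b < xs ! q'" by auto
        with True q' show "(a # xs) ! q < x" by simp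
      qed (use True in simp_all)
    next
      case False
      with x have "x \<in> lrsL b xs" by (auto split: if_splits)
      with Cons.IH obtain p where p: "p < length xs" "xs!p = x" "b < x" "\<forall>q. p < q \<and> q < length xs \<and> b < xs!q \<longrightarrow> xs!q < x" by blast
      show ?thesis
      proof (intro CollectI exI[of _ "Suc p"] conjI allI impI)
        fix q assume q: "Suc p < q \<and> q < length (a # xs) \<and> b < (a # xs) ! q"
        then obtain q' where q': "q = Suc q'" by (cases q) auto
        with q p(4) show "(a # xs) ! q < x" by simp
      qed (use p in simp_all)
    qed
  next
    fix x assume "x \<in> {x. \<exists>p<length (a # xs). (a # xs)!p = x \<and> b < x \<and> (\<forall>q. p < q \<and> q < length (a # xs) \<and> b < (a # xs)!q \<longrightarrow> (a # xs)!q < x)}"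
    then obtain p where p: "p < length (a#xs)" "(a#xs)!p = x" "b < x" "\<forall>q. p < q \<and> q < length (a#xs) \<and> b < (a#xs)!q \<longrightarrow> (a#xs)!q < x" by blast
    show "x \<in> lrsL b (a # xs)"
    proof (cases p)
      case 0
      have "\<forall>y\<in>set xs. b < y \<longrightarrow> y < a"
      proof (intro ballI impI)
        fix y assume y: "y \<in> set xs" "b < y"
        then obtain k where k: "k < length xs" "xs ! k = y" by (auto simp: in_set_conv_nth)
        with p(4)[rule_format, of "Suc k"] y 0 p(2) show "y < a" by simp
      qed
      with p 0 show ?thesis by simp
    next
      case (Suc p')
      have "\<forall>q. p' < q \<and> q < length xs \<and> b < xs!q \<longrightarrow> xs!q < x"
      proof (intro allI impI)
        fix q assume "p' < q \<and> q < length xs \<and> b < xs!q"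
        with p(4)[rule_format, of "Suc q"] Suc show "xs ! q < x" by simp
      qed
      with p Suc have "x \<in> lrsL b xs" unfolding Cons.IH by auto
      then show ?thesis using lrsL_mono by blast
    qed
  qed
qed

lemma rlsL_nth: "rlsL b xs = {x. \<exists>p<length xs. xs!p = x \<and> x < b \<and> (\<forall>q<p. xs!q < b \<longrightarrow> xs!q < x)}"
proof (induction xs)
  case Nil then show ?case by simp
next
  case (Cons a xs)
  show ?case
  proof (rule set_eqI, rule iffI)
    fix x assume x: "x \<in> rlsL b (a # xs)"
    show "x \<in> {x. \<exists>p<length (a # xs). (a # xs)!p = x \<and> x < b \<and> (\<forall>q<p. (a # xs)!q < b \<longrightarrow> (a # xs)!q < x)}"
    proof (cases "x = a \<and> a < b")
      case True
      then show ?thesis by (intro CollectI exI[of _ 0]) simp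
    next
      case False
      with x have xin: "x \<in> rlsL b xs" and ax: "a < b \<longrightarrow> a < x" by (auto split: if_splits)
      with Cons.IH obtain p where p: "p < length xs" "xs!p = x" "x < b" "\<forall>q<p. xs!q < b \<longrightarrow> xs!q < x" by blast
      show ?thesis
      proof (intro CollectI exI[of _ "Suc p"] conjI allI impI)
        fix q assume q: "q < Suc p" "(a # xs) ! q < b"
        show "(a # xs) ! q < x"
        proof (cases q)
          case 0 with q ax show ?thesis by simp
        next
          case (Suc q') with q p(4) show ?thesis by simp
        qed
      qed (use p in simp_all)
    qed
  next
    fix x assume "x \<in> {x. \<exists>p<length (a # xs). (a # xs)!p = x \<and> x < b \<and> (\<forall>q<p. (a # xs)!q < b \<longrightarrow> (a # xs)!q < x)}"
    then obtain p where p: "p < length (a#xs)" "(a#xs)!p = x" "x < b" "\<forall>q<p. (a#xs)!q < b \<longrightarrow> (a#xs)!q < x" by blast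
    show "x \<in> rlsL b (a # xs)"
    proof (cases p)
      case 0
      with p show ?thesis by simp
    next
      case (Suc p')
      have "\<forall>q<p'. xs!q < b \<longrightarrow> xs!q < x"
      proof (intro allI impI)
        fix q assume "q < p'" "xs!q < b"
        with p(4)[rule_format, of "Suc q"] Suc show "xs ! q < x" by simp
      qed
      with p Suc have "x \<in> rlsL b xs" unfolding Cons.IH by auto
      moreover have "a < b \<longrightarrow> a < x" using p(4)[rule_format, of 0] Suc by simp
      ultimately show ?thesis by auto
    qed
  qed
qed

lemma lrsL_filter: "lrsL b (filter (\<lambda>x. b < x) xs) = lrsL b xs"
  by (induction xs) auto

lemma rlsL_filter: "rlsL b (filter (\<lambda>x. x < b) xs) = rlsL b xs"
  by (induction xs) auto



definition mxs :: "letter \<times> nat set \<Rightarrow> nat" where "mxs e = Max (snd e)"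
definition maxw :: "(letter \<times> nat set) list \<Rightarrow> nat list" where
  "maxw st = map mxs (filter (\<lambda>e. snd e \<noteq> {}) st)"

lemma maxw_append[simp]: "maxw (xs @ ys) = maxw xs @ maxw ys"
  by (simp add: maxw_def)

lemma maxw_Cons: "maxw (e # xs) = (if snd e = {} then maxw xs else Max (snd e) # maxw xs)"
  by (simp add: maxw_def mxs_def)

lemma st_split:
  assumes "Suc p < length st"
  shows "st = take p st @ st ! p # st ! Suc p # drop (Suc (Suc p)) st"
proof -
  have "st = take p st @ drop p st" by simp
  also have "drop p st = st ! p # drop (Suc p) st" using assms by (simp add: Cons_nth_drop_Suc)
  also have "drop (Suc p) st = st ! Suc p # drop (Suc (Suc p)) st" using assms by (simp add: Cons_nth_drop_Suc)
  finally show ?thesis .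
qed

lemma upd2_split:
  assumes "Suc p < length st"
  shows "st[p := x, Suc p := y] = take p st @ x # y # drop (Suc (Suc p)) st"
proof -
  let ?s = "st[p := x, Suc p := y]"
  have l: "Suc p < length ?s" using assms by simp
  have "?s = take p ?s @ ?s ! p # ?s ! Suc p # drop (Suc (Suc p)) ?s" using st_split[OF l] .
  moreover have "take p ?s = take p st" by simp
  moreover have "drop (Suc (Suc p)) ?s = drop (Suc (Suc p)) st" by simp
  moreover have "?s ! p = x" "?s ! Suc p = y" using assms by (simp_all add: nth_list_update)
  ultimately show ?thesis by simp
qed

lemma mem_maxw_drop:
  assumes "k \<le> q" "q < length st" "snd (st ! q) \<noteq> {}"
  shows "Max (snd (st ! q)) \<in> set (maxw (drop k st))"
proof -
  have "drop k st ! (q - k) = st ! q" using assms by simp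
  moreover have "q - k < length (drop k st)" using assms by simp
  ultimately have "st ! q \<in> set (drop k st)" by (metis nth_mem)
  then have "st ! q \<in> set (filter (\<lambda>e. snd e \<noteq> {}) (drop k st))" using assms(3) by simp
  then have "mxs (st ! q) \<in> set (maxw (drop k st))" unfolding maxw_def set_map by (rule imageI)
  then show ?thesis by (simp add: mxs_def)
qed

lemma mem_maxw_take:
  assumes "q < k" "q < length st" "snd (st ! q) \<noteq> {}"
  shows "Max (snd (st ! q)) \<in> set (maxw (take k st))"
proof -
  have "take k st ! q = st ! q" using assms by simp
  moreover have "q < length (take k st)" using assms by simp
  ultimately have "st ! q \<in> set (take k st)" by (metis nth_mem)
  then have "st ! q \<in> set (filter (\<lambda>e. snd e \<noteq> {}) (take k st))" using assms(3) by simp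
  then have "mxs (st ! q) \<in> set (maxw (take k st))" unfolding maxw_def set_map by (rule imageI)
  then show ?thesis by (simp add: mxs_def)
qed

definition Inv :: "nat \<Rightarrow> nat \<Rightarrow> nat \<Rightarrow> nat set \<Rightarrow> nat set \<Rightarrow> (letter \<times> nat set) list \<Rightarrow> bool" where
"Inv n bl b1 Li Ri st \<longleftrightarrow>
  (\<forall>q<length st. \<exists>x y. snd (st!q) = {x..y}) \<and>
  (\<forall>q<length st. \<forall>q'<length st. q \<noteq> q' \<longrightarrow> snd (st!q) \<inter> snd (st!q') = {}) \<and>
  (\<forall>v. (\<exists>q<length st. v \<in> snd (st!q)) \<longleftrightarrow> (1 \<le> v \<and> v \<le> n+1 \<and> v \<noteq> bl)) \<and>
  (\<forall>q<length st. fst (st!q) = LL \<longrightarrow> snd (st!q) \<noteq> {} \<and> bl < Max (snd (st!q)) \<and> Max (snd (st!q)) \<le> b1) \<and>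
  (\<forall>q<length st. fst (st!q) \<noteq> LL \<longrightarrow> snd (st!q) \<noteq> {} \<longrightarrow>
     (fst (st!q) = LH \<longleftrightarrow> (Max (snd (st!q)) + 1 = bl \<or> (\<exists>q'. q < q' \<and> q' < length st \<and> Max (snd (st!q)) + 1 \<in> snd (st!q'))))) \<and>
  (b1 \<noteq> bl \<longrightarrow> (\<exists>q<length st. fst (st!q) = LL \<and> b1 \<in> snd (st!q))) \<and>
  lrsL b1 (maxw st) = Li \<and> rlsL bl (maxw st) = Ri"

lemma iv_facts:
  fixes x y :: nat
  assumes "S = {x..y}" "S \<noteq> {}"
  shows "Max S = y" "Min S = x" "x \<le> y" "finite S"
  using assms by (auto intro!: Max_eqI Min_eqI)



lemma step_generic:
  fixes st :: "(letter \<times> nat set) list"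
  assumes inv: "Inv n bl b1 Li Ri st"
    and p: "Suc p < length st"
    and sp: "st!p = (a,E)" "st!Suc p = (b,S)"
    and st'_def: "st' = st[p := (b,N), Suc p := (a,W)]"
    and un: "N \<union> W = E \<union> S" and di: "N \<inter> W = {}"
    and ivN: "\<exists>x y. N = {x..y}" and ivW: "\<exists>x y. W = {x..y}"
    and LN: "b = LL \<longrightarrow> N \<noteq> {} \<and> bl < Max N \<and> Max N \<le> b1"
    and LW: "a = LL \<longrightarrow> W \<noteq> {} \<and> bl < Max W \<and> Max W \<le> b1"
    and JN: "b \<noteq> LL \<longrightarrow> N \<noteq> {} \<longrightarrow> (b = LH \<longleftrightarrow> (Max N + 1 = bl \<or> Max N + 1 \<in> W \<or> (\<exists>q'. Suc p < q' \<and> q' < length st \<and> Max N + 1 \<in> snd (st!q'))))"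
    and JW: "a \<noteq> LL \<longrightarrow> W \<noteq> {} \<longrightarrow> (a = LH \<longleftrightarrow> (Max W + 1 = bl \<or> (\<exists>q'. Suc p < q' \<and> q' < length st \<and> Max W + 1 \<in> snd (st!q'))))"
    and B1: "(a = LL \<longrightarrow> E \<subseteq> W) \<and> (b = LL \<longrightarrow> S \<subseteq> N)"
    and LR: "lrsL b1 (maxw st') = Li" "rlsL bl (maxw st') = Ri"
  shows "Inv n bl b1 Li Ri st'"
proof -
  note I = inv[unfolded Inv_def]
  note I1 = I[THEN conjunct1]
  note I2 = I[THEN conjunct2, THEN conjunct1]
  note I3 = I[THEN conjunct2, THEN conjunct2, THEN conjunct1]
  note I4 = I[THEN conjunct2, THEN conjunct2, THEN conjunct2, THEN conjunct1]
  note I5 = I[THEN conjunct2, THEN conjunct2, THEN conjunct2, THEN conjunct2, THEN conjunct1]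
  note I6 = I[THEN conjunct2, THEN conjunct2, THEN conjunct2, THEN conjunct2, THEN conjunct2, THEN conjunct1]
  have len: "length st' = length st" using st'_def by simp
  have nth': "\<And>q. q < length st \<Longrightarrow> st' ! q = (if q = p then (b,N) else if q = Suc p then (a,W) else st ! q)"
    using st'_def p by (auto simp: nth_list_update)
  have Ep: "snd (st!p) = E" "fst (st!p) = a" using sp by auto
  have Sp: "snd (st!Suc p) = S" "fst (st!Suc p) = b" using sp by auto
  have pl: "p < length st" using p by simp
  have lab': "\<And>q. q < length st \<Longrightarrow> snd (st' ! q) = (if q = p then N else if q = Suc p then W else snd (st ! q))"
    using nth' by simp
  have let': "\<And>q. q < length st \<Longrightarrow> fst (st' ! q) = (if q = p then b else if q = Suc p then a else fst (st ! q))"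
    using nth' by simp
  have C1: "\<forall>q<length st'. \<exists>x y. snd (st'!q) = {x..y}"
  proof (intro allI impI)
    fix q assume "q < length st'"
    then show "\<exists>x y. snd (st'!q) = {x..y}" using I1 ivN ivW lab'[of q] len by auto
  qed
  have C2: "\<forall>q<length st'. \<forall>q'<length st'. q \<noteq> q' \<longrightarrow> snd (st'!q) \<inter> snd (st'!q') = {}"
  proof (intro allI impI)
    fix q q' assume q: "q < length st'" "q' < length st'" "q \<noteq> q'"
    have dES: "E \<inter> S = {}" using I2 pl p Ep Sp by (metis n_not_Suc_n)
    have dE: "\<And>r. r < length st \<Longrightarrow> r \<noteq> p \<Longrightarrow> snd (st!r) \<inter> E = {}" using I2 pl Ep by metis
    have dS: "\<And>r. r < length st \<Longrightarrow> r \<noteq> Suc p \<Longrightarrow> snd (st!r) \<inter> S = {}" using I2 p Sp by metis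
    have sub: "N \<subseteq> E \<union> S" "W \<subseteq> E \<union> S" using un by auto
    have ql: "q < length st" "q' < length st" using q len by auto
    have A: "\<And>r. r < length st \<Longrightarrow> r = p \<or> r = Suc p \<Longrightarrow> snd (st'!r) \<subseteq> E \<union> S"
      using lab' sub by auto
    have B: "\<And>r. r < length st \<Longrightarrow> r \<noteq> p \<Longrightarrow> r \<noteq> Suc p \<Longrightarrow> snd (st'!r) = snd (st!r) \<and> snd (st!r) \<inter> (E \<union> S) = {}"
    proof -
      fix r assume r: "r < length st" "r \<noteq> p" "r \<noteq> Suc p"
      have "snd (st!r) \<inter> E = {}" "snd (st!r) \<inter> S = {}" using dE[OF r(1,2)] dS[OF r(1,3)] by auto
      then show "snd (st'!r) = snd (st!r) \<and> snd (st!r) \<inter> (E \<union> S) = {}" using lab'[OF r(1)] r by auto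
    qed
    show "snd (st'!q) \<inter> snd (st'!q') = {}"
    proof (cases "q = p \<or> q = Suc p")
      case T1: True
      show ?thesis
      proof (cases "q' = p \<or> q' = Suc p")
        case True
        then have "(q = p \<and> q' = Suc p) \<or> (q = Suc p \<and> q' = p)" using T1 q(3) by auto
        then show ?thesis using lab' ql di by (auto simp: Int_commute)
      next
        case False
        then show ?thesis using A[OF ql(1) T1] B[OF ql(2)] by blast
      qed
    next
      case F1: False
      show ?thesis
      proof (cases "q' = p \<or> q' = Suc p")
        case True
        then show ?thesis using A[OF ql(2) True] B[OF ql(1)] F1 by blast
      next
        case False
        then show ?thesis using B[OF ql(1)] B[OF ql(2)] F1 I2 ql q(3) by metis
      qed
    qed
  qed
  have C3: "\<forall>v. (\<exists>q<length st'. v \<in> snd (st'!q)) \<longleftrightarrow> (1 \<le> v \<and> v \<le> n+1 \<and> v \<noteq> bl)"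
  proof (intro allI)
    fix v
    have "(\<exists>q<length st'. v \<in> snd (st'!q)) \<longleftrightarrow> (\<exists>q<length st. v \<in> snd (st!q))"
    proof
      assume "\<exists>q<length st'. v \<in> snd (st'!q)"
      then obtain q where q: "q < length st" "v \<in> snd (st'!q)" using len by auto
      show "\<exists>q<length st. v \<in> snd (st!q)"
      proof (cases "q = p \<or> q = Suc p")
        case True
        then have "v \<in> E \<union> S" using q lab' un by auto
        then show ?thesis using Ep Sp pl p by blast
      next
        case False then show ?thesis using q lab' by auto
      qed
    next
      assume "\<exists>q<length st. v \<in> snd (st!q)"
      then obtain q where q: "q < length st" "v \<in> snd (st!q)" by auto
      show "\<exists>q<length st'. v \<in> snd (st'!q)"
      proof (cases "q = p \<or> q = Suc p")
        case True
        then have "v \<in> N \<union> W" using q Ep Sp un by auto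
        then show ?thesis
        proof
          assume "v \<in> N" then show ?thesis using lab'[of p] pl len by (intro exI[of _ p]) auto
        next
          assume "v \<in> W" then show ?thesis using lab'[of "Suc p"] p len by (intro exI[of _ "Suc p"]) auto
        qed
      next
        case False then show ?thesis using q lab' len by auto
      qed
    qed
    then show "(\<exists>q<length st'. v \<in> snd (st'!q)) \<longleftrightarrow> (1 \<le> v \<and> v \<le> n+1 \<and> v \<noteq> bl)" using I3 by blast
  qed
  have C4: "\<forall>q<length st'. fst (st'!q) = LL \<longrightarrow> snd (st'!q) \<noteq> {} \<and> bl < Max (snd (st'!q)) \<and> Max (snd (st'!q)) \<le> b1"
  proof (intro allI impI)
    fix q assume "q < length st'" "fst (st'!q) = LL"
    then show "snd (st'!q) \<noteq> {} \<and> bl < Max (snd (st'!q)) \<and> Max (snd (st'!q)) \<le> b1"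
      using I4 LN LW len nth'[of q] by (auto split: if_splits)
  qed
  have reach: "\<And>q v. q < length st \<Longrightarrow> q \<noteq> p \<Longrightarrow> q \<noteq> Suc p \<Longrightarrow>
      (\<exists>q'. q < q' \<and> q' < length st \<and> v \<in> snd (st'!q')) \<longleftrightarrow> (\<exists>q'. q < q' \<and> q' < length st \<and> v \<in> snd (st!q'))"
  proof -
    fix q v assume q: "q < length st" "q \<noteq> p" "q \<noteq> Suc p"
    show "(\<exists>q'. q < q' \<and> q' < length st \<and> v \<in> snd (st'!q')) \<longleftrightarrow> (\<exists>q'. q < q' \<and> q' < length st \<and> v \<in> snd (st!q'))"
    proof (cases "q < p")
      case True
      show ?thesis
      proof
        assume "\<exists>q'. q < q' \<and> q' < length st \<and> v \<in> snd (st'!q')"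
        then obtain q' where q': "q < q'" "q' < length st" "v \<in> snd (st'!q')" by blast
        show "\<exists>q'. q < q' \<and> q' < length st \<and> v \<in> snd (st!q')"
        proof (cases "q' = p \<or> q' = Suc p")
          case True
          then have "v \<in> E \<union> S" using q' lab' un by auto
          then show ?thesis
          proof
            assume "v \<in> E" then show ?thesis using Ep pl \<open>q < p\<close> by (intro exI[of _ p]) auto
          next
            assume "v \<in> S" then show ?thesis using Sp p \<open>q < p\<close> by (intro exI[of _ "Suc p"]) auto
          qed
        next
          case False then show ?thesis using q' lab' by auto
        qed
      next
        assume "\<exists>q'. q < q' \<and> q' < length st \<and> v \<in> snd (st!q')"
        then obtain q' where q': "q < q'" "q' < length st" "v \<in> snd (st!q')" by blast
        show "\<exists>q'. q < q' \<and> q' < length st \<and> v \<in> snd (st'!q')"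
        proof (cases "q' = p \<or> q' = Suc p")
          case True
          then have "v \<in> N \<union> W" using q' Ep Sp un by auto
          then show ?thesis
          proof
            assume "v \<in> N" then show ?thesis using lab'[of p] pl \<open>q < p\<close> by (intro exI[of _ p]) auto
          next
            assume "v \<in> W" then show ?thesis using lab'[of "Suc p"] p \<open>q < p\<close> by (intro exI[of _ "Suc p"]) auto
          qed
        next
          case False then show ?thesis using q' lab' by auto
        qed
      qed
    next
      case False
      then have "Suc p < q" using q by linarith
      then show ?thesis using lab' by auto
    qed
  qed
  have C5: "\<forall>q<length st'. fst (st'!q) \<noteq> LL \<longrightarrow> snd (st'!q) \<noteq> {} \<longrightarrow>
     (fst (st'!q) = LH \<longleftrightarrow> (Max (snd (st'!q)) + 1 = bl \<or> (\<exists>q'. q < q' \<and> q' < length st' \<and> Max (snd (st'!q)) + 1 \<in> snd (st'!q'))))"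
  proof (intro allI impI)
    fix q assume q: "q < length st'" "fst (st'!q) \<noteq> LL" "snd (st'!q) \<noteq> {}"
    show "fst (st'!q) = LH \<longleftrightarrow> (Max (snd (st'!q)) + 1 = bl \<or> (\<exists>q'. q < q' \<and> q' < length st' \<and> Max (snd (st'!q)) + 1 \<in> snd (st'!q')))"
    proof (cases "q = p")
      case True
      have ex: "(\<exists>q'. p < q' \<and> q' < length st \<and> Max N + 1 \<in> snd (st'!q')) \<longleftrightarrow>
            (Max N + 1 \<in> W \<or> (\<exists>q'. Suc p < q' \<and> q' < length st \<and> Max N + 1 \<in> snd (st!q')))"
      proof
        assume "\<exists>q'. p < q' \<and> q' < length st \<and> Max N + 1 \<in> snd (st'!q')"
        then obtain q' where q': "p < q'" "q' < length st" "Max N + 1 \<in> snd (st'!q')" by blast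
        then show "Max N + 1 \<in> W \<or> (\<exists>q'. Suc p < q' \<and> q' < length st \<and> Max N + 1 \<in> snd (st!q'))"
          using lab'[of q'] by (cases "q' = Suc p") auto
      next
        assume "Max N + 1 \<in> W \<or> (\<exists>q'. Suc p < q' \<and> q' < length st \<and> Max N + 1 \<in> snd (st!q'))"
        then show "\<exists>q'. p < q' \<and> q' < length st \<and> Max N + 1 \<in> snd (st'!q')"
        proof
          assume "Max N + 1 \<in> W" then show ?thesis using lab'[of "Suc p"] p by auto
        next
          assume "\<exists>q'. Suc p < q' \<and> q' < length st \<and> Max N + 1 \<in> snd (st!q')"
          then obtain q' where "Suc p < q'" "q' < length st" "Max N + 1 \<in> snd (st!q')" by blast
          then show ?thesis using lab'[of q'] by (intro exI[of _ q']) auto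
        qed
      qed
      show ?thesis using True q JN ex len lab'[of p] let'[of p] pl by auto
    next
      case F1: False
      show ?thesis
      proof (cases "q = Suc p")
        case True
        have ex: "(\<exists>q'. Suc p < q' \<and> q' < length st \<and> Max W + 1 \<in> snd (st'!q')) \<longleftrightarrow>
            (\<exists>q'. Suc p < q' \<and> q' < length st \<and> Max W + 1 \<in> snd (st!q'))"
          using lab' by auto
        show ?thesis using True q JW ex len lab'[of "Suc p"] let'[of "Suc p"] p by auto
      next
        case False
        have "q < length st" using q len by simp
        then have "st' ! q = st ! q" using F1 False nth'[of q] by simp
        then show ?thesis using \<open>q < length st\<close> q I5 reach[of q] F1 False len by auto
      qed
    qed
  qed
  have C6: "b1 \<noteq> bl \<longrightarrow> (\<exists>q<length st'. fst (st'!q) = LL \<and> b1 \<in> snd (st'!q))"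
  proof
    assume "b1 \<noteq> bl"
    then obtain q where q: "q < length st" "fst (st!q) = LL" "b1 \<in> snd (st!q)" using I6 by blast
    show "\<exists>q<length st'. fst (st'!q) = LL \<and> b1 \<in> snd (st'!q)"
    proof (cases "q = p")
      case True
      then have "a = LL" "b1 \<in> W" using q sp B1 by auto
      then show ?thesis using nth'[of "Suc p"] p len by (intro exI[of _ "Suc p"]) auto
    next
      case F: False
      show ?thesis
      proof (cases "q = Suc p")
        case True
        then have "b = LL" "b1 \<in> N" using q sp B1 by auto
        then show ?thesis using nth'[of p] pl len by (intro exI[of _ p]) auto
      next
        case False
        then show ?thesis using F q nth'[of q] len by (intro exI[of _ q]) auto
      qed
    qed
  qed
  show ?thesis unfolding Inv_def using C1 C2 C3 C4 C5 C6 LR len by simp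
qed



lemma maxw_Nil[simp]: "maxw [] = []" by (simp add: maxw_def)

lemma step_inv:
  fixes st :: "(letter \<times> nat set) list"
  assumes inv: "Inv n bl b1 Li Ri st" and blb: "bl \<le> b1" and bln: "bl \<le> n + 1"
    and p: "Suc p < length st" and sp: "st!p = (a,E)" "st!Suc p = (b,S)"
    and tok: "tile_ok a b" and ft: "fe_tile a E b S = (N,W,t)"
  shows "Inv n bl b1 Li Ri (st[p := (b,N), Suc p := (a,W)])"
proof -
  note I = inv[unfolded Inv_def]
  note I1 = I[THEN conjunct1]
  note I2 = I[THEN conjunct2, THEN conjunct1]
  note I3 = I[THEN conjunct2, THEN conjunct2, THEN conjunct1]
  note I4 = I[THEN conjunct2, THEN conjunct2, THEN conjunct2, THEN conjunct1]
  note I5 = I[THEN conjunct2, THEN conjunct2, THEN conjunct2, THEN conjunct2, THEN conjunct1]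
  note I7 = I[THEN conjunct2, THEN conjunct2, THEN conjunct2, THEN conjunct2, THEN conjunct2, THEN conjunct2]
  have LiD: "Li = lrsL b1 (maxw st)" and RiD: "Ri = rlsL bl (maxw st)" using I7 by auto
  have pl: "p < length st" using p by simp
  have Ep: "snd (st!p) = E" "fst (st!p) = a" and Sp: "snd (st!Suc p) = S" "fst (st!Suc p) = b" using sp by auto
  obtain e0 e1 where E: "E = {e0..e1}" using I1[rule_format, OF pl] Ep by auto
  obtain s0 s1 where S: "S = {s0..s1}" using I1[rule_format, OF p] Sp by auto
  have dES: "E \<inter> S = {}" using I2[rule_format, OF pl p] Ep Sp by simp
  have tok': "(a = LH \<and> b = LZ) \<or> (a = LH \<and> b = LL) \<or> (a = LL \<and> b = LZ)"
    using tok unfolding tile_ok_def by auto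
  have notbl: "\<And>q. q < length st \<Longrightarrow> bl \<notin> snd (st!q)" using I3 by blast
  have owner: "\<And>v. 1 \<le> v \<Longrightarrow> v \<le> n+1 \<Longrightarrow> v \<noteq> bl \<Longrightarrow> \<exists>q<length st. v \<in> snd (st!q)" using I3 by blast
  have finl: "\<And>q. q < length st \<Longrightarrow> finite (snd (st!q))"
  proof -
    fix q assume "q < length st"
    then obtain c d where "snd (st!q) = {c..d}" using I1 by blast
    then show "finite (snd (st!q))" by simp
  qed
  have le_max: "\<And>q v. q < length st \<Longrightarrow> v \<in> snd (st!q) \<Longrightarrow> v \<le> Max (snd (st!q))"
    using finl by simp
  have ownlt: "\<And>q v. q < length st \<Longrightarrow> v \<in> snd (st!q) \<Longrightarrow> v < bl \<Longrightarrow> Max (snd (st!q)) < bl"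
  proof -
    fix q v assume q: "q < length st" "v \<in> snd (st!q)" "v < bl"
    obtain c d where cd: "snd (st!q) = {c..d}" using I1 q(1) by blast
    then have "Max (snd (st!q)) = d" using q(2) by (auto intro!: Max_eqI)
    moreover have "\<not> d \<ge> bl" using cd q notbl[OF q(1)] by auto
    ultimately show "Max (snd (st!q)) < bl" by simp
  qed
  have Enz: "E \<noteq> {} \<Longrightarrow> Max E = e1 \<and> e0 \<le> e1 \<and> Min E = e0" using iv_facts[OF E] by blast
  have Snz: "S \<noteq> {} \<Longrightarrow> Max S = s1 \<and> s0 \<le> s1 \<and> Min S = s0" using iv_facts[OF S] by blast
  have L_p: "a = LL \<Longrightarrow> E \<noteq> {} \<and> bl < Max E \<and> Max E \<le> b1" using I4[rule_format, OF pl] Ep by simp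
  have L_s: "b = LL \<Longrightarrow> S \<noteq> {} \<and> bl < Max S \<and> Max S \<le> b1" using I4[rule_format, OF p] Sp by simp
  have J_p: "a \<noteq> LL \<Longrightarrow> E \<noteq> {} \<Longrightarrow> (a = LH \<longleftrightarrow> (Max E + 1 = bl \<or> (\<exists>q'. p < q' \<and> q' < length st \<and> Max E + 1 \<in> snd (st!q'))))"
    using I5[rule_format, OF pl] Ep by simp
  have J_s: "b \<noteq> LL \<Longrightarrow> S \<noteq> {} \<Longrightarrow> (b = LH \<longleftrightarrow> (Max S + 1 = bl \<or> (\<exists>q'. Suc p < q' \<and> q' < length st \<and> Max S + 1 \<in> snd (st!q'))))"
    using I5[rule_format, OF p] Sp by simp
  have shift: "\<exists>q'. Suc p < q' \<and> q' < length st \<and> v \<in> snd (st!q')"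
    if h1: "\<exists>q'. p < q' \<and> q' < length st \<and> v \<in> snd (st!q')" and h2: "v \<notin> S" for v
  proof -
    obtain q' where q': "p < q'" "q' < length st" "v \<in> snd (st!q')" using h1 by blast
    have "q' \<noteq> Suc p" using q'(3) h2 Sp by auto
    then have "Suc p < q'" using q'(1) by linarith
    then show ?thesis using q' by blast
  qed
  define xs where "xs = maxw (take p st)"
  define ys where "ys = maxw (drop (Suc (Suc p)) st)"
  have mw: "maxw st = xs @ maxw [(a,E),(b,S)] @ ys"
  proof -
    have eq: "st = take p st @ [(a,E),(b,S)] @ drop (Suc (Suc p)) st" using st_split[OF p] sp by simp
    have "maxw st = maxw (take p st @ [(a,E),(b,S)] @ drop (Suc (Suc p)) st)" using eq by (rule arg_cong)
    then show ?thesis unfolding xs_def ys_def by (simp only: maxw_append)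
  qed
  have mw': "maxw (st[p := (b,N), Suc p := (a,W)]) = xs @ maxw [(b,N),(a,W)] @ ys"
  proof -
    have eq: "st[p := (b,N), Suc p := (a,W)] = take p st @ [(b,N),(a,W)] @ drop (Suc (Suc p)) st" using upd2_split[OF p] by simp
    show ?thesis unfolding eq xs_def ys_def by (simp only: maxw_append)
  qed
  have inys: "\<And>q. Suc p < q \<Longrightarrow> q < length st \<Longrightarrow> snd (st!q) \<noteq> {} \<Longrightarrow> Max (snd (st!q)) \<in> set ys"
    unfolding ys_def by (rule mem_maxw_drop) auto
  have inxs: "\<And>q. q < p \<Longrightarrow> snd (st!q) \<noteq> {} \<Longrightarrow> Max (snd (st!q)) \<in> set xs"
    unfolding xs_def using pl by (intro mem_maxw_take) auto
  have bigys: "\<And>v. Suc p < q' \<Longrightarrow> q' < length st \<Longrightarrow> v \<in> snd (st!q') \<Longrightarrow> \<exists>t\<in>set ys. v \<le> t" for q'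
    using inys le_max by blast
  \<comment> \<open>left owner of the successor of a 0 particle at Suc p\<close>
  have leftown: "\<exists>s\<in>set xs. s < bl \<and> Max S < s"
    if h: "b = LZ" "S \<noteq> {}" "Max S < bl" "Max S + 1 \<notin> E"
  proof -
    have nj: "\<not> (Max S + 1 = bl \<or> (\<exists>q'. Suc p < q' \<and> q' < length st \<and> Max S + 1 \<in> snd (st!q')))"
      using J_s h by auto
    then have ne: "Max S + 1 \<noteq> bl" by blast
    have "Max S + 1 \<le> n + 1" using h(3) bln by simp
    then obtain q where q: "q < length st" "Max S + 1 \<in> snd (st!q)" using owner[of "Max S + 1"] ne by auto
    have "q \<noteq> Suc p"
    proof
      assume "q = Suc p"
      then have "Max S + 1 \<le> Max S" using le_max[OF p] q(2) Sp by metis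
      then show False by simp
    qed
    moreover have "q \<noteq> p" using q(2) Ep h(4) by auto
    moreover have "\<not> Suc p < q" using nj q by blast
    ultimately have qp: "q < p" by linarith
    have "Max S + 1 < bl" using ne h by simp
    then have "Max (snd (st!q)) < bl" using ownlt q by blast
    moreover have "Max S < Max (snd (st!q))" using le_max[OF q] by simp
    moreover have "snd (st!q) \<noteq> {}" using q by auto
    ultimately show ?thesis using inxs[OF qp] by blast
  qed
  consider (RI) "succ_lab E S \<and> b = LZ" | (RII) "\<not> (succ_lab E S \<and> b = LZ)" "succ_lab S E \<and> a = LH"
    | (RIII) "\<not> (succ_lab E S \<and> b = LZ)" "\<not> (succ_lab S E \<and> a = LH)" by blast
  then show ?thesis
  proof cases
    case RI
    then have NW: "N = {}" "W = E \<union> S" using ft unfolding fe_tile_def by auto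
    have ne: "E \<noteq> {}" "S \<noteq> {}" and mn: "Min E = Max S + 1" using RI unfolding succ_lab_def by auto
    have e: "e0 = s1 + 1" "e0 \<le> e1" "s0 \<le> s1" using mn Enz[OF ne(1)] Snz[OF ne(2)] by auto
    have Wiv: "W = {s0..e1}" unfolding NW E S using e by auto
    have MW: "Max W = e1" using iv_facts[OF Wiv] NW ne by simp
    have ME: "Max E = e1" "Max S = s1" using Enz Snz ne by auto
    have JW: "a \<noteq> LL \<longrightarrow> W \<noteq> {} \<longrightarrow> (a = LH \<longleftrightarrow> (Max W + 1 = bl \<or> (\<exists>q'. Suc p < q' \<and> q' < length st \<and> Max W + 1 \<in> snd (st!q'))))"
    proof (intro impI)
      assume "a \<noteq> LL" "W \<noteq> {}"
      then have aH: "a = LH" using tok' by auto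
      then have "Max E + 1 = bl \<or> (\<exists>q'. p < q' \<and> q' < length st \<and> Max E + 1 \<in> snd (st!q'))"
        using J_p ne by auto
      moreover have "e1 + 1 \<notin> S" using S e by auto
      ultimately have "e1 + 1 = bl \<or> (\<exists>q'. Suc p < q' \<and> q' < length st \<and> e1 + 1 \<in> snd (st!q'))"
        using ME shift by auto
      then show "a = LH \<longleftrightarrow> (Max W + 1 = bl \<or> (\<exists>q'. Suc p < q' \<and> q' < length st \<and> Max W + 1 \<in> snd (st!q')))"
        using aH MW by simp
    qed
    have mwst: "maxw st = xs @ e1 # s1 # ys" using mw ne ME by (simp add: maxw_Cons)
    have mwst': "maxw (st[p := (b,N), Suc p := (a,W)]) = xs @ e1 # ys" using mw' NW ne MW by (simp add: maxw_Cons)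
    have c1: "b1 < s1 \<longrightarrow> (\<exists>t\<in>set ys. b1 < t \<and> s1 < t)"
    proof
      assume "b1 < s1"
      then have "b1 < e1" using e by simp
      then have "a \<noteq> LL" using L_p ME by auto
      then have "e1 + 1 = bl \<or> (\<exists>q'. Suc p < q' \<and> q' < length st \<and> e1 + 1 \<in> snd (st!q'))"
        using JW MW NW ne tok' by auto
      moreover have "e1 + 1 \<noteq> bl" using \<open>b1 < e1\<close> blb by simp
      ultimately obtain q' where "Suc p < q'" "q' < length st" "e1 + 1 \<in> snd (st!q')" by blast
      then obtain t where "t \<in> set ys" "e1 + 1 \<le> t" using bigys by blast
      then show "\<exists>t\<in>set ys. b1 < t \<and> s1 < t" using \<open>b1 < e1\<close> e by (intro bexI[of _ t]) auto
    qed
    have c2: "s1 < bl \<longrightarrow> e1 < bl"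
    proof
      assume "s1 < bl"
      have "s1 + 1 \<in> E" using E e by auto
      then have "s1 + 1 \<noteq> bl" using notbl[OF pl] Ep by auto
      then have "s1 + 1 < bl" using \<open>s1 < bl\<close> by simp
      then show "e1 < bl" using ownlt[OF pl] Ep \<open>s1 + 1 \<in> E\<close> ME by metis
    qed
    have LR: "lrsL b1 (maxw (st[p := (b,N), Suc p := (a,W)])) = Li" "rlsL bl (maxw (st[p := (b,N), Suc p := (a,W)])) = Ri"
      unfolding LiD RiD mwst mwst' using lrsL_del2[OF c1] rlsL_del2[OF _ c2] e by auto
    show ?thesis
    proof (rule step_generic[OF inv p sp refl])
      show "N \<union> W = E \<union> S" "N \<inter> W = {}" using NW by auto
      show "\<exists>x y. N = {x..y}" using NW by (intro exI[of _ 1] exI[of _ 0]) auto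
      show "\<exists>x y. W = {x..y}" using Wiv by blast
      show "b = LL \<longrightarrow> N \<noteq> {} \<and> bl < Max N \<and> Max N \<le> b1" using RI by simp
      show "a = LL \<longrightarrow> W \<noteq> {} \<and> bl < Max W \<and> Max W \<le> b1" using L_p MW ME NW by auto
      show "b \<noteq> LL \<longrightarrow> N \<noteq> {} \<longrightarrow> (b = LH \<longleftrightarrow> (Max N + 1 = bl \<or> Max N + 1 \<in> W \<or> (\<exists>q'. Suc p < q' \<and> q' < length st \<and> Max N + 1 \<in> snd (st!q'))))"
        using NW by simp
      show "a \<noteq> LL \<longrightarrow> W \<noteq> {} \<longrightarrow> (a = LH \<longleftrightarrow> (Max W + 1 = bl \<or> (\<exists>q'. Suc p < q' \<and> q' < length st \<and> Max W + 1 \<in> snd (st!q'))))"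
        by (rule JW)
      show "(a = LL \<longrightarrow> E \<subseteq> W) \<and> (b = LL \<longrightarrow> S \<subseteq> N)" using NW RI by auto
    qed (use LR in auto)
  next
    case RII
    then have NW: "N = E \<union> S" "W = {}" using ft unfolding fe_tile_def by auto
    have ne: "E \<noteq> {}" "S \<noteq> {}" and mn: "Min S = Max E + 1" and aH: "a = LH" using RII unfolding succ_lab_def by auto
    have e: "s0 = e1 + 1" "e0 \<le> e1" "s0 \<le> s1" using mn Enz[OF ne(1)] Snz[OF ne(2)] by auto
    have Niv: "N = {e0..s1}" unfolding NW E S using e by auto
    have MN: "Max N = s1" using iv_facts[OF Niv] NW ne by simp
    have ME: "Max E = e1" "Max S = s1" using Enz Snz ne by auto
    have mwst: "maxw st = xs @ e1 # s1 # ys" using mw ne ME by (simp add: maxw_Cons)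
    have mwst': "maxw (st[p := (b,N), Suc p := (a,W)]) = xs @ s1 # ys" using mw' NW ne MN by (simp add: maxw_Cons)
    have c2: "e1 < bl \<longrightarrow> (\<exists>s\<in>set xs. s < bl \<and> e1 < s)"
    proof
      assume "e1 < bl"
      have "e1 + 1 \<in> S" using S e by auto
      then have "e1 + 1 \<noteq> bl" using notbl[OF p] Sp by auto
      then have "e1 + 1 < bl" using \<open>e1 < bl\<close> by simp
      then have "s1 < bl" using ownlt[OF p] Sp \<open>e1 + 1 \<in> S\<close> ME by metis
      then have "b \<noteq> LL" using L_s ME by auto
      then have "b = LZ" using tok' by auto
      moreover have "Max S + 1 \<notin> E" using E ME e by auto
      ultimately obtain s where "s \<in> set xs" "s < bl" "Max S < s" using leftown ne \<open>s1 < bl\<close> ME by blast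
      then show "\<exists>s\<in>set xs. s < bl \<and> e1 < s" using ME e by (intro bexI[of _ s]) auto
    qed
    have LR: "lrsL b1 (maxw (st[p := (b,N), Suc p := (a,W)])) = Li" "rlsL bl (maxw (st[p := (b,N), Suc p := (a,W)])) = Ri"
      unfolding LiD RiD mwst mwst' using lrsL_del1 rlsL_del1[OF _ c2] e by auto
    show ?thesis
    proof (rule step_generic[OF inv p sp refl])
      show "N \<union> W = E \<union> S" "N \<inter> W = {}" using NW by auto
      show "\<exists>x y. W = {x..y}" using NW by (intro exI[of _ 1] exI[of _ 0]) auto
      show "\<exists>x y. N = {x..y}" using Niv by blast
      show "a = LL \<longrightarrow> W \<noteq> {} \<and> bl < Max W \<and> Max W \<le> b1" using aH by simp
      show "b = LL \<longrightarrow> N \<noteq> {} \<and> bl < Max N \<and> Max N \<le> b1" using L_s MN ME NW by auto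
      show "a \<noteq> LL \<longrightarrow> W \<noteq> {} \<longrightarrow> (a = LH \<longleftrightarrow> (Max W + 1 = bl \<or> (\<exists>q'. Suc p < q' \<and> q' < length st \<and> Max W + 1 \<in> snd (st!q'))))"
        using NW by simp
      show "b \<noteq> LL \<longrightarrow> N \<noteq> {} \<longrightarrow> (b = LH \<longleftrightarrow> (Max N + 1 = bl \<or> Max N + 1 \<in> W \<or> (\<exists>q'. Suc p < q' \<and> q' < length st \<and> Max N + 1 \<in> snd (st!q'))))"
        using J_s ne MN ME NW by auto
      show "(a = LL \<longrightarrow> E \<subseteq> W) \<and> (b = LL \<longrightarrow> S \<subseteq> N)" using NW aH by auto
    qed (use LR in auto)
  next
    case RIII
    then have NW: "N = S" "W = E" using ft unfolding fe_tile_def by auto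
    have sE: "S \<noteq> {} \<Longrightarrow> Max S + 1 \<notin> E" if "b = LZ"
    proof
      assume ne: "S \<noteq> {}" and m: "Max S + 1 \<in> E"
      then have "E \<noteq> {}" by auto
      have m': "e0 \<le> s1 + 1" "s1 + 1 \<le> e1" "s0 \<le> s1" using m E Snz[OF ne] by auto
      have "\<not> e0 \<le> s1"
      proof
        assume "e0 \<le> s1"
        then have "s1 \<in> E" "s1 \<in> S" using m' E S by auto
        then show False using dES by blast
      qed
      then have "e0 = s1 + 1" using m' by linarith
      then have "Min E = Max S + 1" using Enz[OF \<open>E \<noteq> {}\<close>] Snz[OF ne] by simp
      then show False using RIII(1) that ne \<open>E \<noteq> {}\<close> unfolding succ_lab_def by auto
    qed
    have eS: "E \<noteq> {} \<Longrightarrow> Max E + 1 \<notin> S" if "a = LH"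
    proof
      assume ne: "E \<noteq> {}" and m: "Max E + 1 \<in> S"
      then have "S \<noteq> {}" by auto
      have m': "s0 \<le> e1 + 1" "e1 + 1 \<le> s1" "e0 \<le> e1" using m S Enz[OF ne] by auto
      have "\<not> s0 \<le> e1"
      proof
        assume "s0 \<le> e1"
        then have "e1 \<in> E" "e1 \<in> S" using m' E S by auto
        then show False using dES by blast
      qed
      then have "s0 = e1 + 1" using m' by linarith
      then have "Min S = Max E + 1" using Snz[OF \<open>S \<noteq> {}\<close>] Enz[OF ne] by simp
      then show False using RIII(2) that ne \<open>S \<noteq> {}\<close> unfolding succ_lab_def by auto
    qed
    have JW: "a \<noteq> LL \<longrightarrow> W \<noteq> {} \<longrightarrow> (a = LH \<longleftrightarrow> (Max W + 1 = bl \<or> (\<exists>q'. Suc p < q' \<and> q' < length st \<and> Max W + 1 \<in> snd (st!q'))))"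
    proof (intro impI)
      assume "a \<noteq> LL" "W \<noteq> {}"
      then have aH: "a = LH" and ne: "E \<noteq> {}" using tok' NW by auto
      then have "Max E + 1 = bl \<or> (\<exists>q'. p < q' \<and> q' < length st \<and> Max E + 1 \<in> snd (st!q'))"
        using J_p by auto
      then have "Max E + 1 = bl \<or> (\<exists>q'. Suc p < q' \<and> q' < length st \<and> Max E + 1 \<in> snd (st!q'))"
        using eS[OF aH ne] shift by blast
      then show "a = LH \<longleftrightarrow> (Max W + 1 = bl \<or> (\<exists>q'. Suc p < q' \<and> q' < length st \<and> Max W + 1 \<in> snd (st!q')))"
        using aH NW by simp
    qed
    have LR: "lrsL b1 (maxw (st[p := (b,N), Suc p := (a,W)])) = Li \<and> rlsL bl (maxw (st[p := (b,N), Suc p := (a,W)])) = Ri"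
    proof (cases "E = {} \<or> S = {}")
      case True
      then have "maxw [(b,N),(a,W)] = maxw [(a,E),(b,S)]" using NW by (auto simp: maxw_Cons)
      then show ?thesis using mw mw' LiD RiD by simp
    next
      case False
      then have ne: "E \<noteq> {}" "S \<noteq> {}" by auto
      have mwst: "maxw st = xs @ Max E # Max S # ys" using mw ne by (simp add: maxw_Cons)
      have mwst': "maxw (st[p := (b,N), Suc p := (a,W)]) = xs @ Max S # Max E # ys" using mw' NW ne by (simp add: maxw_Cons)
      have c1: "b1 < Max E \<and> b1 < Max S \<longrightarrow> (\<exists>t\<in>set ys. b1 < t \<and> Max E < t)"
      proof
        assume "b1 < Max E \<and> b1 < Max S"
        then have "a \<noteq> LL" using L_p by auto
        then have "Max E + 1 = bl \<or> (\<exists>q'. Suc p < q' \<and> q' < length st \<and> Max E + 1 \<in> snd (st!q'))"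
          using JW NW ne tok' by auto
        moreover have "Max E + 1 \<noteq> bl" using \<open>b1 < Max E \<and> b1 < Max S\<close> blb by simp
        ultimately obtain q' where "Suc p < q'" "q' < length st" "Max E + 1 \<in> snd (st!q')" by blast
        then obtain t where "t \<in> set ys" "Max E + 1 \<le> t" using bigys by blast
        then show "\<exists>t\<in>set ys. b1 < t \<and> Max E < t" using \<open>b1 < Max E \<and> b1 < Max S\<close> by (intro bexI[of _ t]) auto
      qed
      have c2: "Max E < bl \<and> Max S < bl \<longrightarrow> (\<exists>s\<in>set xs. s < bl \<and> Max S < s)"
      proof
        assume a2: "Max E < bl \<and> Max S < bl"
        then have "b \<noteq> LL" using L_s by auto
        then have "b = LZ" using tok' by auto
        then show "\<exists>s\<in>set xs. s < bl \<and> Max S < s" using leftown ne a2 sE by blast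
      qed
      show ?thesis unfolding LiD RiD mwst mwst' using lrsL_swap[OF c1] rlsL_swap[OF c2] by simp
    qed
    show ?thesis
    proof (rule step_generic[OF inv p sp refl])
      show "N \<union> W = E \<union> S" "N \<inter> W = {}" using NW dES by auto
      show "\<exists>x y. W = {x..y}" using NW E by blast
      show "\<exists>x y. N = {x..y}" using NW S by blast
      show "a = LL \<longrightarrow> W \<noteq> {} \<and> bl < Max W \<and> Max W \<le> b1" using L_p NW by auto
      show "b = LL \<longrightarrow> N \<noteq> {} \<and> bl < Max N \<and> Max N \<le> b1" using L_s NW by auto
      show "a \<noteq> LL \<longrightarrow> W \<noteq> {} \<longrightarrow> (a = LH \<longleftrightarrow> (Max W + 1 = bl \<or> (\<exists>q'. Suc p < q' \<and> q' < length st \<and> Max W + 1 \<in> snd (st!q'))))"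
        by (rule JW)
      show "b \<noteq> LL \<longrightarrow> N \<noteq> {} \<longrightarrow> (b = LH \<longleftrightarrow> (Max N + 1 = bl \<or> Max N + 1 \<in> W \<or> (\<exists>q'. Suc p < q' \<and> q' < length st \<and> Max N + 1 \<in> snd (st!q'))))"
      proof (intro impI)
        assume "b \<noteq> LL" "N \<noteq> {}"
        then have bZ: "b = LZ" and ne: "S \<noteq> {}" using tok' NW by auto
        then show "b = LH \<longleftrightarrow> (Max N + 1 = bl \<or> Max N + 1 \<in> W \<or> (\<exists>q'. Suc p < q' \<and> q' < length st \<and> Max N + 1 \<in> snd (st!q')))"
          using J_s[of] sE[OF bZ ne] NW by auto
      qed
      show "(a = LL \<longrightarrow> E \<subseteq> W) \<and> (b = LL \<longrightarrow> S \<subseteq> N)" using NW by auto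
    qed (use LR in auto)
  qed
qed



definition cnt :: "letter \<Rightarrow> (letter \<times> nat set) list \<Rightarrow> nat" where
  "cnt c st = length (filter (\<lambda>e. fst e = c \<and> snd e \<noteq> {}) st)"

definition nsym :: "tsym \<Rightarrow> tsym list \<Rightarrow> nat" where
  "nsym s T = length (filter (\<lambda>x. x = s) T)"

lemma cnt_append[simp]: "cnt c (xs @ ys) = cnt c xs + cnt c ys"
  by (simp add: cnt_def)

lemma cnt_Cons: "cnt c (e # xs) = (if fst e = c \<and> snd e \<noteq> {} then 1 else 0) + cnt c xs"
  by (simp add: cnt_def)

lemma cnt_Nil[simp]: "cnt c [] = 0" by (simp add: cnt_def)

lemma count_step:
  assumes p: "Suc p < length st" and sp: "st!p = (a,E)" "st!Suc p = (b,S)"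
    and ft: "fe_tile a E b S = (N,W,t)"
  shows "cnt LZ st = cnt LZ (st[p := (b,N), Suc p := (a,W)]) + (if t = SAlpha then 1 else 0)"
    and "cnt LH st = cnt LH (st[p := (b,N), Suc p := (a,W)]) + (if t = SBeta then 1 else 0)"
proof -
  have e1: "st = take p st @ [(a,E),(b,S)] @ drop (Suc (Suc p)) st" using st_split[OF p] sp by simp
  have e2: "st[p := (b,N), Suc p := (a,W)] = take p st @ [(b,N),(a,W)] @ drop (Suc (Suc p)) st"
    using upd2_split[OF p] by simp
  have loc: "cnt LZ [(a,E),(b,S)] = cnt LZ [(b,N),(a,W)] + (if t = SAlpha then 1 else 0) \<and>
             cnt LH [(a,E),(b,S)] = cnt LH [(b,N),(a,W)] + (if t = SBeta then 1 else 0)"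
    using ft unfolding fe_tile_def succ_lab_def by (auto simp: cnt_Cons split: if_splits)
  have z1: "cnt c st = cnt c (take p st) + cnt c [(a,E),(b,S)] + cnt c (drop (Suc (Suc p)) st)" for c
    using arg_cong[OF e1, of "cnt c"] by (simp add: cnt_Cons)
  have z2: "cnt c (st[p := (b,N), Suc p := (a,W)]) = cnt c (take p st) + cnt c [(b,N),(a,W)] + cnt c (drop (Suc (Suc p)) st)" for c
    unfolding e2 by (simp add: cnt_Cons)
  show "cnt LZ st = cnt LZ (st[p := (b,N), Suc p := (a,W)]) + (if t = SAlpha then 1 else 0)"
    unfolding z1 z2 using loc by linarith
  show "cnt LH st = cnt LH (st[p := (b,N), Suc p := (a,W)]) + (if t = SBeta then 1 else 0)"
    unfolding z1 z2 using loc by linarith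
qed

lemma letters_step:
  assumes p: "Suc p < length st" and sp: "st!p = (a,E)" "st!Suc p = (b,S)"
  shows "map fst (st[p := (b,N), Suc p := (a,W)]) = swap_at (map fst st) p"
  using p sp unfolding swap_at_def by (simp add: map_update)

lemma run_lemma:
  fixes st :: "(letter \<times> nat set) list"
  assumes "Inv n bl b1 Li Ri st" "bl \<le> b1" "bl \<le> n + 1" "tiling_seq (map fst st) ps"
  shows "\<exists>stf. Inv n bl b1 Li Ri stf \<and> map fst stf = nw_word (map fst stf) \<and>
     cnt LZ st = cnt LZ stf + nsym SAlpha (fe_fill st ps) \<and>
     cnt LH st = cnt LH stf + nsym SBeta (fe_fill st ps)"
  using assms
proof (induction ps arbitrary: st)
  case Nil
  then show ?case by (intro exI[of _ st]) (simp add: nsym_def)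
next
  case (Cons p ps)
  have p: "Suc p < length st" and tok: "tile_ok (fst (st!p)) (fst (st!Suc p))"
    and ts: "tiling_seq (swap_at (map fst st) p) ps" using Cons.prems(4) by auto
  obtain a E where sa: "st!p = (a,E)" by (cases "st!p")
  obtain b S where sb: "st!Suc p = (b,S)" by (cases "st!Suc p")
  obtain N W t where ft: "fe_tile a E b S = (N,W,t)" by (cases "fe_tile a E b S")
  let ?st' = "st[p := (b,N), Suc p := (a,W)]"
  have ff: "fe_fill st (p # ps) = t # fe_fill ?st' ps" using sa sb ft by simp
  have inv': "Inv n bl b1 Li Ri ?st'"
    using step_inv[OF Cons.prems(1,2,3) p sa sb _ ft] tok sa sb by simp
  have ts': "tiling_seq (map fst ?st') ps" using ts letters_step[OF p sa sb] by simp
  obtain stf where stf: "Inv n bl b1 Li Ri stf" "map fst stf = nw_word (map fst stf)"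
    "cnt LZ ?st' = cnt LZ stf + nsym SAlpha (fe_fill ?st' ps)"
    "cnt LH ?st' = cnt LH stf + nsym SBeta (fe_fill ?st' ps)"
    using Cons.IH[OF inv' Cons.prems(2,3) ts'] by blast
  have c: "cnt LZ st = cnt LZ ?st' + (if t = SAlpha then 1 else 0)"
    "cnt LH st = cnt LH ?st' + (if t = SBeta then 1 else 0)"
    using count_step[OF p sa sb ft] by auto
  show ?case
    by (intro exI[of _ stf]) (use stf c ff in \<open>auto simp: nsym_def\<close>)
qed

lemma prod_sym:
  fixes \<alpha> \<beta> :: "'a::comm_semiring_1"
  shows "prod_list (map (sym_val \<alpha> \<beta> 1) T) = \<alpha> ^ nsym SAlpha T * \<beta> ^ nsym SBeta T"
  by (induction T) (auto simp: nsym_def sym_val_def split: tsym.splits simp: algebra_simps)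



fun rk :: "letter \<Rightarrow> nat" where "rk LZ = 0" | "rk LL = 1" | "rk LH = 2"

lemma sorted_filter_const: "sorted (map rk (filter (\<lambda>d. d = c) xs))"
  by (induction xs) auto

lemma nw_sorted: "sorted (map rk (nw_word w))"
  unfolding nw_word_def by (auto simp: sorted_append sorted_filter_const)

lemma final_order:
  assumes "map fst st = nw_word (map fst st)" "p < q" "q < length st"
  shows "fst (st!q) = LZ \<Longrightarrow> fst (st!p) = LZ" and "fst (st!p) = LH \<Longrightarrow> fst (st!q) = LH"
proof -
  have s: "sorted (map rk (map fst st))" using nw_sorted assms(1) by metis
  have "rk (fst (st!p)) \<le> rk (fst (st!q))"
    using sorted_nth_mono[OF s, of p q] assms by simp
  then show "fst (st!q) = LZ \<Longrightarrow> fst (st!p) = LZ" and "fst (st!p) = LH \<Longrightarrow> fst (st!q) = LH"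
    by (cases "fst (st!p)"; cases "fst (st!q)"; simp)+
qed

lemma lrsL_pos:
  "lrsL b (maxw st) = lrsL b (map (\<lambda>e. if snd e \<noteq> {} then Max (snd e) else 0) st)"
proof -
  have "filter (\<lambda>x. b < x) (map (\<lambda>e. if snd e \<noteq> {} then Max (snd e) else 0) st) = filter (\<lambda>x. b < x) (maxw st)"
    by (induction st) (auto simp: maxw_Cons)
  then show ?thesis by (metis lrsL_filter)
qed

lemma rlsL_pos:
  "rlsL b (maxw st) = rlsL b (map (\<lambda>e. if snd e \<noteq> {} then Max (snd e) else b) st)"
proof -
  have "filter (\<lambda>x. x < b) (map (\<lambda>e. if snd e \<noteq> {} then Max (snd e) else b) st) = filter (\<lambda>x. x < b) (maxw st)"
    by (induction st) (auto simp: maxw_Cons)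
  then show ?thesis by (metis rlsL_filter)
qed

lemma final_counts:
  fixes st :: "(letter \<times> nat set) list"
  assumes inv: "Inv n bl b1 Li Ri st" and blb: "bl \<le> b1" and bln: "bl \<le> n + 1"
    and fin: "map fst st = nw_word (map fst st)"
  shows "cnt LZ st = card Li" "cnt LH st = card Ri"
proof -
  note I = inv[unfolded Inv_def]
  note I1 = I[THEN conjunct1]
  note I2 = I[THEN conjunct2, THEN conjunct1]
  note I3 = I[THEN conjunct2, THEN conjunct2, THEN conjunct1]
  note I4 = I[THEN conjunct2, THEN conjunct2, THEN conjunct2, THEN conjunct1]
  note I5 = I[THEN conjunct2, THEN conjunct2, THEN conjunct2, THEN conjunct2, THEN conjunct1]
  note I6 = I[THEN conjunct2, THEN conjunct2, THEN conjunct2, THEN conjunct2, THEN conjunct2, THEN conjunct1]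
  note I7 = I[THEN conjunct2, THEN conjunct2, THEN conjunct2, THEN conjunct2, THEN conjunct2, THEN conjunct2]
  have LiD: "Li = lrsL b1 (maxw st)" and RiD: "Ri = rlsL bl (maxw st)" using I7 by auto
  let ?L = "\<lambda>q. snd (st!q)"
  let ?M = "\<lambda>q. Max (snd (st!q))"
  have finl: "\<And>q. q < length st \<Longrightarrow> finite (?L q)"
  proof -
    fix q assume "q < length st"
    then obtain c d where "snd (st!q) = {c..d}" using I1 by blast
    then show "finite (?L q)" by simp
  qed
  have le_max: "\<And>q v. q < length st \<Longrightarrow> v \<in> ?L q \<Longrightarrow> v \<le> ?M q" using finl by simp
  have max_in: "\<And>q. q < length st \<Longrightarrow> ?L q \<noteq> {} \<Longrightarrow> ?M q \<in> ?L q" using finl by simp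
  have inV: "\<And>q v. q < length st \<Longrightarrow> v \<in> ?L q \<Longrightarrow> 1 \<le> v \<and> v \<le> n+1 \<and> v \<noteq> bl" using I3 by blast
  have owner: "\<And>v. 1 \<le> v \<Longrightarrow> v \<le> n+1 \<Longrightarrow> v \<noteq> bl \<Longrightarrow> \<exists>q<length st. v \<in> ?L q" using I3 by blast
  have disj: "\<And>q q' v. q < length st \<Longrightarrow> q' < length st \<Longrightarrow> v \<in> ?L q \<Longrightarrow> v \<in> ?L q' \<Longrightarrow> q = q'"
    using I2 by blast
  have ivl: "\<And>q v. q < length st \<Longrightarrow> u \<in> ?L q \<Longrightarrow> u \<le> v \<Longrightarrow> v \<le> ?M q \<Longrightarrow> v \<in> ?L q" for u
  proof -
    fix q v assume h: "q < length st" "u \<in> ?L q" "u \<le> v" "v \<le> ?M q"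
    obtain c d where cd: "?L q = {c..d}" using I1 h(1) by blast
    then have "?M q = d" using h(2) by (auto intro!: Max_eqI)
    then show "v \<in> ?L q" using cd h by auto
  qed
  have zchain: "\<forall>p<length st. fst (st!p) = LZ \<longrightarrow> ?L p \<noteq> {} \<longrightarrow> n + 1 - ?M p = k \<longrightarrow>
      (\<forall>v. ?M p < v \<longrightarrow> v \<le> n+1 \<longrightarrow> (\<exists>q<p. v \<in> ?L q))" for k
  proof (induction k rule: less_induct)
    case (less k)
    show ?case
    proof (intro allI impI)
      fix p v assume p: "p < length st" "fst (st!p) = LZ" "?L p \<noteq> {}" "n + 1 - ?M p = k" "?M p < v" "v \<le> n+1"
      have nj: "\<not> (?M p + 1 = bl \<or> (\<exists>q'. p < q' \<and> q' < length st \<and> ?M p + 1 \<in> ?L q'))"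
        using I5[rule_format, OF p(1)] p(2,3) by auto
      then have "?M p + 1 \<noteq> bl" by blast
      moreover have "?M p + 1 \<le> n + 1" using p by simp
      ultimately obtain q where q: "q < length st" "?M p + 1 \<in> ?L q" using owner[of "?M p + 1"] by auto
      have "q \<noteq> p" using le_max[OF p(1)] q(2) by fastforce
      moreover have "\<not> p < q" using nj q by blast
      ultimately have qp: "q < p" by linarith
      have qZ: "fst (st!q) = LZ" using final_order(1)[OF fin qp p(1) p(2)] .
      have qne: "?L q \<noteq> {}" using q by auto
      have Mq: "?M p < ?M q" using le_max[OF q] by simp
      show "\<exists>q<p. v \<in> ?L q"
      proof (cases "v \<le> ?M q")
        case True
        then have "v \<in> ?L q" using ivl[OF q(1) q(2)] p(5) by simp
        then show ?thesis using qp by blast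
      next
        case False
        have "?M q \<le> n + 1" using inV[OF q(1) max_in[OF q(1) qne]] by simp
        then have "n + 1 - ?M q < k" using Mq p(4) by linarith
        then have ih: "\<forall>p<length st. fst (st!p) = LZ \<longrightarrow> ?L p \<noteq> {} \<longrightarrow> n + 1 - ?M p = n + 1 - ?M q \<longrightarrow>
            (\<forall>v. ?M p < v \<longrightarrow> v \<le> n+1 \<longrightarrow> (\<exists>q'<p. v \<in> ?L q'))" by (rule less.IH)
        have "?M q < v" using False by simp
        then have "\<exists>q'<q. v \<in> ?L q'" using ih q(1) qZ qne p(6) by blast
        then obtain q' where "q' < q" "v \<in> ?L q'" by blast
        then show ?thesis using qp by (intro exI[of _ q']) auto
      qed
    qed
  qed
  have zch: "\<And>p v. p < length st \<Longrightarrow> fst (st!p) = LZ \<Longrightarrow> ?L p \<noteq> {} \<Longrightarrow> ?M p < v \<Longrightarrow> v \<le> n+1 \<Longrightarrow> \<exists>q<p. v \<in> ?L q"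
    using zchain by blast
  have hchain: "\<forall>p<length st. fst (st!p) = LH \<longrightarrow> ?L p \<noteq> {} \<longrightarrow> n + 1 - ?M p = k \<longrightarrow>
      ?M p < bl \<and> (\<forall>v. ?M p < v \<longrightarrow> v < bl \<longrightarrow> (\<exists>q. p < q \<and> q < length st \<and> v \<in> ?L q))" for k
  proof (induction k rule: less_induct)
    case (less k)
    show ?case
    proof (intro allI impI)
      fix p assume p: "p < length st" "fst (st!p) = LH" "?L p \<noteq> {}" "n + 1 - ?M p = k"
      have j: "?M p + 1 = bl \<or> (\<exists>q'. p < q' \<and> q' < length st \<and> ?M p + 1 \<in> ?L q')"
        using I5[rule_format, OF p(1)] p(2,3) by auto
      show "?M p < bl \<and> (\<forall>v. ?M p < v \<longrightarrow> v < bl \<longrightarrow> (\<exists>q. p < q \<and> q < length st \<and> v \<in> ?L q))"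
      proof (cases "?M p + 1 = bl")
        case True then show ?thesis by auto
      next
        case False
        then obtain q where q: "p < q" "q < length st" "?M p + 1 \<in> ?L q" using j by blast
        have qH: "fst (st!q) = LH" using final_order(2)[OF fin q(1) q(2) p(2)] .
        have qne: "?L q \<noteq> {}" using q by auto
        have Mq: "?M p < ?M q" using le_max[OF q(2,3)] by simp
        have "?M q \<le> n + 1" using inV[OF q(2) max_in[OF q(2) qne]] by simp
        then have "n + 1 - ?M q < k" using Mq p(4) by linarith
        then have ih: "\<forall>p<length st. fst (st!p) = LH \<longrightarrow> ?L p \<noteq> {} \<longrightarrow> n + 1 - ?M p = n + 1 - ?M q \<longrightarrow>
            ?M p < bl \<and> (\<forall>v. ?M p < v \<longrightarrow> v < bl \<longrightarrow> (\<exists>q'. p < q' \<and> q' < length st \<and> v \<in> ?L q'))" by (rule less.IH)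
        have IH: "?M q < bl \<and> (\<forall>v. ?M q < v \<longrightarrow> v < bl \<longrightarrow> (\<exists>q'. q < q' \<and> q' < length st \<and> v \<in> ?L q'))"
          using ih q(2) qH qne by blast
        have "\<forall>v. ?M p < v \<longrightarrow> v < bl \<longrightarrow> (\<exists>q. p < q \<and> q < length st \<and> v \<in> ?L q)"
        proof (intro allI impI)
          fix v assume v: "?M p < v" "v < bl"
          show "\<exists>q. p < q \<and> q < length st \<and> v \<in> ?L q"
          proof (cases "v \<le> ?M q")
            case True
            then have "v \<in> ?L q" using ivl[OF q(2) q(3)] v by simp
            then show ?thesis using q by blast
          next
            case False
            then have "?M q < v" by simp
            then have "\<exists>q'. q < q' \<and> q' < length st \<and> v \<in> ?L q'" using IH v(2) by blast
            then obtain q' where "q < q'" "q' < length st" "v \<in> ?L q'" by blast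
            then show ?thesis using q by (intro exI[of _ q']) auto
          qed
        qed
        then show ?thesis using IH Mq by auto
      qed
    qed
  qed
  have hch: "\<And>p. p < length st \<Longrightarrow> fst (st!p) = LH \<Longrightarrow> ?L p \<noteq> {} \<Longrightarrow>
      ?M p < bl \<and> (\<forall>v. ?M p < v \<longrightarrow> v < bl \<longrightarrow> (\<exists>q. p < q \<and> q < length st \<and> v \<in> ?L q))"
    using hchain by blast
  have zgt: "\<And>p. p < length st \<Longrightarrow> fst (st!p) = LZ \<Longrightarrow> ?L p \<noteq> {} \<Longrightarrow> b1 < ?M p"
  proof (rule ccontr)
    fix p assume p: "p < length st" "fst (st!p) = LZ" "?L p \<noteq> {}" "\<not> b1 < ?M p"
    have mV: "1 \<le> ?M p \<and> ?M p \<le> n+1 \<and> ?M p \<noteq> bl" using inV[OF p(1) max_in[OF p(1,3)]] .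
    show False
    proof (cases "b1 = bl")
      case True
      then have "?M p < bl" using p(4) mV by simp
      then have "\<exists>q<p. bl \<in> ?L q" using zch[OF p(1,2,3), of bl] bln by blast
      then obtain q where q: "q < p" "bl \<in> ?L q" by blast
      have "q < length st" using q(1) p(1) by simp
      then show False using inV q(2) by blast
    next
      case False
      then obtain q0 where q0: "q0 < length st" "fst (st!q0) = LL" "b1 \<in> ?L q0" using I6 by blast
      have "?M p \<noteq> b1"
      proof
        assume "?M p = b1"
        then have "p = q0" using disj[OF p(1) q0(1) _ q0(3)] max_in[OF p(1,3)] by simp
        then show False using p(2) q0(2) by simp
      qed
      then have "?M p < b1" using p(4) by simp
      moreover have "b1 \<le> n + 1" using inV[OF q0(1,3)] by simp
      ultimately obtain q where q: "q < p" "b1 \<in> ?L q" using zch[OF p(1,2,3), of b1] by auto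
      then have "q = q0" using disj[OF _ q0(1) q(2) q0(3)] p(1) by simp
      then show False using final_order(1)[OF fin q(1) p(1) p(2)] q0(2) by simp
    qed
  qed
  define Zs where "Zs = {q. q < length st \<and> fst (st!q) = LZ \<and> ?L q \<noteq> {}}"
  define Hs where "Hs = {q. q < length st \<and> fst (st!q) = LH \<and> ?L q \<noteq> {}}"
  have injM: "inj_on ?M A" if "A \<subseteq> {q. q < length st \<and> ?L q \<noteq> {}}" for A
  proof (rule inj_onI)
    fix x y assume "x \<in> A" "y \<in> A" "?M x = ?M y"
    then show "x = y" using that disj[of x y "?M x"] max_in[of x] max_in[of y] by auto
  qed
  have cZ: "cnt LZ st = card Zs" unfolding cnt_def Zs_def length_filter_conv_card by simp
  have cH: "cnt LH st = card Hs" unfolding cnt_def Hs_def length_filter_conv_card by simp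
  define g where "g = (\<lambda>e::letter \<times> nat set. if snd e \<noteq> {} then Max (snd e) else (0::nat))"
  define g' where "g' = (\<lambda>e::letter \<times> nat set. if snd e \<noteq> {} then Max (snd e) else bl)"
  have "Li = lrsL b1 (map g st)" unfolding LiD g_def by (rule lrsL_pos)
  also have "\<dots> = {x. \<exists>p<length st. g (st!p) = x \<and> b1 < x \<and> (\<forall>q. p < q \<and> q < length st \<and> b1 < g (st!q) \<longrightarrow> g (st!q) < x)}"
    unfolding lrsL_nth[of b1 "map g st"] by (simp cong: conj_cong)
  finally have LiP: "Li = {x. \<exists>p<length st. g (st!p) = x \<and> b1 < x \<and> (\<forall>q. p < q \<and> q < length st \<and> b1 < g (st!q) \<longrightarrow> g (st!q) < x)}" .
  have "Ri = rlsL bl (map g' st)" unfolding RiD g'_def by (rule rlsL_pos)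
  also have "\<dots> = {x. \<exists>p<length st. g' (st!p) = x \<and> x < bl \<and> (\<forall>q<p. g' (st!q) < bl \<longrightarrow> g' (st!q) < x)}"
    unfolding rlsL_nth[of bl "map g' st"] by (simp cong: conj_cong)
  finally have RiP: "Ri = {x. \<exists>p<length st. g' (st!p) = x \<and> x < bl \<and> (\<forall>q<p. g' (st!q) < bl \<longrightarrow> g' (st!q) < x)}" .
  have Lset: "Li = ?M ` Zs"
  proof
    show "Li \<subseteq> ?M ` Zs"
    proof
      fix x assume "x \<in> Li"
      then obtain p where p: "p < length st" "(if ?L p \<noteq> {} then ?M p else 0) = x" "b1 < x"
        unfolding LiP g_def by auto
      then have ne: "?L p \<noteq> {}" and x: "x = ?M p" by (auto split: if_splits)
      have "fst (st!p) \<noteq> LL" using I4[rule_format, OF p(1)] x p(3) by auto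
      moreover have "fst (st!p) \<noteq> LH" using hch[OF p(1) _ ne] x p(3) blb by auto
      ultimately have "fst (st!p) = LZ" by (cases "fst (st!p)") auto
      then show "x \<in> ?M ` Zs" using p(1) ne x unfolding Zs_def by blast
    qed
  next
    show "?M ` Zs \<subseteq> Li"
    proof
      fix x assume "x \<in> ?M ` Zs"
      then obtain p where p: "p < length st" "fst (st!p) = LZ" "?L p \<noteq> {}" and x: "x = ?M p"
        unfolding Zs_def by blast
      have gt: "b1 < x" using zgt[OF p] x by simp
      have rest: "\<forall>q. p < q \<and> q < length st \<and> b1 < (if ?L q \<noteq> {} then ?M q else 0) \<longrightarrow> (if ?L q \<noteq> {} then ?M q else 0) < x"
      proof (intro allI impI)
        fix q assume q: "p < q \<and> q < length st \<and> b1 < (if ?L q \<noteq> {} then ?M q else 0)"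
        then have qne: "?L q \<noteq> {}" by (auto split: if_splits)
        show "(if ?L q \<noteq> {} then ?M q else 0) < x"
        proof (rule ccontr)
          assume "\<not> (if ?L q \<noteq> {} then ?M q else 0) < x"
          then have ge: "x \<le> ?M q" using qne by simp
          have "x \<noteq> ?M q"
          proof
            assume "x = ?M q"
            then have "p = q" using disj[OF p(1) _ max_in[OF p(1,3)]] max_in[of q] qne q x by auto
            then show False using q by simp
          qed
          then have "x < ?M q" using ge by simp
          moreover have "?M q \<le> n+1" using inV[of q "?M q"] max_in[of q] q qne by auto
          ultimately obtain q' where "q' < p" "?M q \<in> ?L q'" using zch[OF p] x by blast
          then have "q' = q" using disj[of q' q "?M q"] max_in[of q] q qne p(1) by auto
          then show False using \<open>q' < p\<close> q by simp
        qed
      qed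
      have "g (st!p) = x" using p(3) x unfolding g_def by simp
      moreover have "\<forall>q. p < q \<and> q < length st \<and> b1 < g (st!q) \<longrightarrow> g (st!q) < x" using rest unfolding g_def .
      ultimately show "x \<in> Li" unfolding LiP using p(1) gt by blast
    qed
  qed
  have Rset: "Ri = ?M ` Hs"
  proof
    show "Ri \<subseteq> ?M ` Hs"
    proof
      fix x assume "x \<in> Ri"
      then obtain p where p: "p < length st" "(if ?L p \<noteq> {} then ?M p else bl) = x" "x < bl"
        unfolding RiP g'_def by auto
      then have ne: "?L p \<noteq> {}" and x: "x = ?M p" by (auto split: if_splits)
      have "fst (st!p) \<noteq> LL" using I4[rule_format, OF p(1)] x p(3) by auto
      moreover have "fst (st!p) \<noteq> LZ" using zgt[OF p(1) _ ne] x p(3) blb by auto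
      ultimately have "fst (st!p) = LH" by (cases "fst (st!p)") auto
      then show "x \<in> ?M ` Hs" using p(1) ne x unfolding Hs_def by blast
    qed
  next
    show "?M ` Hs \<subseteq> Ri"
    proof
      fix x assume "x \<in> ?M ` Hs"
      then obtain p where p: "p < length st" "fst (st!p) = LH" "?L p \<noteq> {}" and x: "x = ?M p"
        unfolding Hs_def by blast
      have hp: "?M p < bl \<and> (\<forall>v. ?M p < v \<longrightarrow> v < bl \<longrightarrow> (\<exists>q. p < q \<and> q < length st \<and> v \<in> ?L q))"
        using hch[OF p] .
      have rest: "\<forall>q<p. (if ?L q \<noteq> {} then ?M q else bl) < bl \<longrightarrow> (if ?L q \<noteq> {} then ?M q else bl) < x"
      proof (intro allI impI)
        fix q assume q: "q < p" "(if ?L q \<noteq> {} then ?M q else bl) < bl"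
        then have qne: "?L q \<noteq> {}" and qb: "?M q < bl" by (auto split: if_splits)
        have ql: "q < length st" using q p by simp
        show "(if ?L q \<noteq> {} then ?M q else bl) < x"
        proof (rule ccontr)
          assume "\<not> (if ?L q \<noteq> {} then ?M q else bl) < x"
          then have ge: "x \<le> ?M q" using qne by simp
          have "x \<noteq> ?M q"
          proof
            assume "x = ?M q"
            then have "p = q" using disj[OF p(1) ql max_in[OF p(1,3)]] max_in[OF ql qne] x by auto
            then show False using q by simp
          qed
          then have "x < ?M q" using ge by simp
          then obtain q' where "p < q'" "q' < length st" "?M q \<in> ?L q'" using hp qb x by blast
          then have "q' = q" using disj[of q' q "?M q"] max_in[OF ql qne] ql by auto
          then show False using \<open>p < q'\<close> q by simp
        qed
      qed
      have "g' (st!p) = x" using p(3) x unfolding g'_def by simp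
      moreover have "\<forall>q<p. g' (st!q) < bl \<longrightarrow> g' (st!q) < x" using rest unfolding g'_def .
      moreover have "x < bl" using hp x by simp
      ultimately show "x \<in> Ri" unfolding RiP using p(1) by blast
    qed
  qed
  show "cnt LZ st = card Li" unfolding cZ Lset
    by (rule card_image[symmetric], rule injM) (auto simp: Zs_def)
  show "cnt LH st = card Ri" unfolding cH Rset
    by (rule card_image[symmetric], rule injM) (auto simp: Hs_def)
qed



lemma sw_distinct: "sorted_wrt (>) (xs :: nat list) \<Longrightarrow> distinct xs"
  by (induction xs) auto

lemma sw_hd_ge: "sorted_wrt (>) (xs :: nat list) \<Longrightarrow> x \<in> set xs \<Longrightarrow> x \<le> hd xs"
  by (cases xs) auto

lemma sw_last_le: "sorted_wrt (>) (xs :: nat list) \<Longrightarrow> x \<in> set xs \<Longrightarrow> last xs \<le> x"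
proof (induction xs)
  case Nil then show ?case by simp
next
  case (Cons a xs)
  show ?case
  proof (cases "xs = []")
    case True then show ?thesis using Cons by simp
  next
    case False
    then have "last xs \<in> set xs" by simp
    then have la: "last xs < a" using Cons.prems(1) by simp
    show ?thesis
    proof (cases "x = a")
      case True then show ?thesis using la False by simp
    next
      case F2: False
      then have "x \<in> set xs" using Cons.prems(2) by simp
      then show ?thesis using Cons.IH Cons.prems(1) False by simp
    qed
  qed
qed

lemma three_letters: "nletters LH X + nletters LZ X + nletters LL X = length X"
  unfolding nletters_def
proof (induction X)
  case (Cons a X) then show ?case by (cases a) auto
qed simp

lemma butlast_set_distinct: "distinct w \<Longrightarrow> w \<noteq> [] \<Longrightarrow> set (butlast w) = set w - {last w}"
proof -
  assume d: "distinct w" and ne: "w \<noteq> []"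
  have e: "w = butlast w @ [last w]" using ne by simp
  then have "distinct (butlast w @ [last w])" using d by metis
  then have "last w \<notin> set (butlast w)" by simp
  moreover have "set w = set (butlast w) \<union> {last w}" using e by (metis set_append empty_set list.set(2))
  ultimately show ?thesis by auto
qed

lemma is_increase_iff: "is_increase bs x \<longleftrightarrow> x \<notin> block_ends bs \<and>
   (\<exists>p q. p < q \<and> q < length (concat bs) \<and> concat bs ! p = x \<and> concat bs ! q = Suc x)"
  unfolding is_increase_def Let_def by simp

lemma init_facts:
  assumes rn: "r \<le> n" and A: "bs \<in> assemblees (n + 1) (r + 1)"
  shows "Inv n (bmin bs) (bmax bs) (lrs bs) (rls bs) (init_labels bs)"
    and "bmin bs \<le> bmax bs" and "bmin bs \<le> n + 1"
    and "map fst (init_labels bs) = Xword bs"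
    and "cnt LZ (init_labels bs) = nletters LZ (Xword bs)"
    and "cnt LH (init_labels bs) = nletters LH (Xword bs)"
    and "nletters LH (Xword bs) + nletters LZ (Xword bs) = n - r"
proof -
  define w where "w = concat bs"
  define bl where "bl = bmin bs"
  define b1 where "b1 = bmax bs"
  have lenbs: "length bs = r + 1" and nemp: "\<forall>b\<in>set bs. b \<noteq> []" and dw: "distinct w"
    and sw: "set w = {1..n+1}" and srt: "sorted_wrt (>) (map last bs)"
    using A unfolding assemblees_def w_def by auto
  have lw: "length w = n + 1" using distinct_card[OF dw] sw by simp
  have bsne: "bs \<noteq> []" using lenbs by auto
  have wne: "w \<noteq> []" using lw by auto
  have lastbs: "last bs \<noteq> []" using nemp bsne by simp
  have blw: "last w = bl"
  proof -
    have "bs = butlast bs @ [last bs]" using bsne by simp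
    then have "w = concat (butlast bs) @ last bs" unfolding w_def by (metis concat.simps concat_append append_Nil2)
    then show ?thesis using lastbs unfolding bl_def bmin_def by simp
  qed
  have wn: "w ! n = bl" using blw lw wne by (simp add: last_conv_nth)
  have BE: "block_ends bs = set (map last bs)" unfolding block_ends_def ..
  have hdml: "hd (map last bs) = b1" using bsne unfolding b1_def bmax_def by (simp add: hd_map)
  have lastml: "last (map last bs) = bl" using bsne unfolding bl_def bmin_def by (simp add: last_map)
  have be_le: "\<And>x. x \<in> block_ends bs \<Longrightarrow> bl \<le> x \<and> x \<le> b1"
    using sw_hd_ge[OF srt] sw_last_le[OF srt] hdml lastml BE by metis
  have be_in: "\<And>x. x \<in> block_ends bs \<Longrightarrow> x \<in> set w"
  proof -
    fix x assume "x \<in> block_ends bs"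
    then obtain b where b: "b \<in> set bs" "x = last b" unfolding BE by auto
    then have "x \<in> set b" using nemp by simp
    then show "x \<in> set w" unfolding w_def using b(1) by auto
  qed
  have bl_be: "bl \<in> block_ends bs" using lastml bsne BE by (metis last_in_set map_is_Nil_conv)
  have b1_be: "b1 \<in> block_ends bs" using hdml bsne BE by (metis hd_in_set map_is_Nil_conv)
  have blb: "bl \<le> b1" using be_le[OF bl_be] by simp
  have blin: "bl \<in> set w" using be_in[OF bl_be] .
  then have bln: "1 \<le> bl \<and> bl \<le> n + 1" using sw by auto
  define X where "X = Xword bs"
  have X: "X = map (letter_of bs) (butlast w)" unfolding X_def Xword_def w_def ..
  have lX: "length X = n" using X lw by simp
  have ini: "init_labels bs = zip X (map (\<lambda>x. {x}) (butlast w))" unfolding init_labels_def X_def w_def ..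
  have li: "length (init_labels bs) = n" using ini lX lw by simp
  have ni: "\<And>p. p < n \<Longrightarrow> init_labels bs ! p = (letter_of bs (w!p), {w!p})"
    using ini X lw by (simp add: nth_butlast)
  have wp_ne: "\<And>p. p < n \<Longrightarrow> w ! p \<noteq> bl"
  proof
    fix p assume "p < n" "w ! p = bl"
    then have "w ! p = w ! n" using wn by simp
    then have "p = n" using dw lw \<open>p < n\<close> by (simp add: nth_eq_iff_index_eq)
    then show False using \<open>p < n\<close> by simp
  qed
  have mfst: "map fst (init_labels bs) = X" using ini lX lw by simp
  have allne: "\<forall>e\<in>set (init_labels bs). snd e \<noteq> {}" using ini by (auto simp: set_zip)
  have cntX: "cnt c (init_labels bs) = nletters c X" for c
  proof -
    have "cnt c (init_labels bs) = length (filter (\<lambda>e. fst e = c) (init_labels bs))"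
      unfolding cnt_def using allne by (metis (mono_tags, lifting) filter_cong)
    also have "\<dots> = length (filter (\<lambda>d. d = c) (map fst (init_labels bs)))"
      by (simp add: filter_map comp_def)
    finally show ?thesis unfolding mfst nletters_def .
  qed
  have maxw_init: "maxw (init_labels bs) = butlast w"
  proof -
    have "maxw (init_labels bs) = map (\<lambda>e. Max (snd e)) (init_labels bs)"
      unfolding maxw_def mxs_def using allne by (simp add: filter_id_conv)
    also have "\<dots> = butlast w" unfolding ini
      by (rule nth_equalityI) (use lX lw in auto)
    finally show ?thesis .
  qed
  have wsplit: "w = butlast w @ [bl]" using append_butlast_last_id[OF wne] blw by simp
  have lrsw: "lrs bs = lrsL b1 w" unfolding lrs_def Let_def lrsL_nth b1_def w_def by simp
  have rlsw: "rls bs = rlsL bl w" unfolding rls_def Let_def rlsL_nth bl_def w_def by simp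
  have lrs_eq: "lrsL b1 (maxw (init_labels bs)) = lrs bs"
  proof -
    have "lrsL b1 w = lrsL b1 (butlast w @ [bl])" using wsplit by metis
    also have "\<dots> = lrsL b1 (butlast w)" unfolding lrsL_append using blb by auto
    finally show ?thesis using lrsw maxw_init by simp
  qed
  have rls_eq: "rlsL bl (maxw (init_labels bs)) = rls bs"
  proof -
    have "rlsL bl w = rlsL bl (butlast w @ [bl])" using wsplit by metis
    also have "\<dots> = rlsL bl (butlast w)" unfolding rlsL_append by auto
    finally show ?thesis using rlsw maxw_init by simp
  qed
  show "Inv n (bmin bs) (bmax bs) (lrs bs) (rls bs) (init_labels bs)"
    unfolding bl_def[symmetric] b1_def[symmetric] Inv_def
  proof (intro conjI)
    show "\<forall>q<length (init_labels bs). \<exists>x y. snd (init_labels bs ! q) = {x..y}"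
    proof (intro allI impI)
      fix q assume "q < length (init_labels bs)"
      then have "snd (init_labels bs ! q) = {w!q..w!q}" using li ni by simp
      then show "\<exists>x y. snd (init_labels bs ! q) = {x..y}" by blast
    qed
    show "\<forall>q<length (init_labels bs). \<forall>q'<length (init_labels bs). q \<noteq> q' \<longrightarrow> snd (init_labels bs ! q) \<inter> snd (init_labels bs ! q') = {}"
      using li ni dw lw by (auto simp: nth_eq_iff_index_eq)
    show "\<forall>v. (\<exists>q<length (init_labels bs). v \<in> snd (init_labels bs ! q)) = (1 \<le> v \<and> v \<le> n + 1 \<and> v \<noteq> bl)"
    proof
      fix v
      have "(\<exists>q<length (init_labels bs). v \<in> snd (init_labels bs ! q)) \<longleftrightarrow> (\<exists>q<n. w ! q = v)"
        using li ni by auto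
      also have "\<dots> \<longleftrightarrow> v \<in> set (butlast w)" using lw by (auto simp: in_set_conv_nth nth_butlast)
      also have "\<dots> \<longleftrightarrow> v \<in> set w - {bl}" using butlast_set_distinct[OF dw wne] blw by simp
      also have "\<dots> \<longleftrightarrow> (1 \<le> v \<and> v \<le> n + 1 \<and> v \<noteq> bl)" using sw by auto
      finally show "(\<exists>q<length (init_labels bs). v \<in> snd (init_labels bs ! q)) = (1 \<le> v \<and> v \<le> n + 1 \<and> v \<noteq> bl)" .
    qed
    show "\<forall>q<length (init_labels bs). fst (init_labels bs ! q) = LL \<longrightarrow> snd (init_labels bs ! q) \<noteq> {} \<and> bl < Max (snd (init_labels bs ! q)) \<and> Max (snd (init_labels bs ! q)) \<le> b1"
    proof (intro allI impI)
      fix q assume q: "q < length (init_labels bs)" "fst (init_labels bs ! q) = LL"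
      then have qn: "q < n" using li by simp
      then have "letter_of bs (w!q) = LL" using q ni by simp
      then have "w!q \<in> block_ends bs" unfolding letter_of_def by (auto split: if_splits)
      then show "snd (init_labels bs ! q) \<noteq> {} \<and> bl < Max (snd (init_labels bs ! q)) \<and> Max (snd (init_labels bs ! q)) \<le> b1"
        using be_le wp_ne[OF qn] ni[OF qn] by force
    qed
    show "\<forall>q<length (init_labels bs). fst (init_labels bs ! q) \<noteq> LL \<longrightarrow> snd (init_labels bs ! q) \<noteq> {} \<longrightarrow>
     (fst (init_labels bs ! q) = LH) = (Max (snd (init_labels bs ! q)) + 1 = bl \<or> (\<exists>q'>q. q' < length (init_labels bs) \<and> Max (snd (init_labels bs ! q)) + 1 \<in> snd (init_labels bs ! q')))"
    proof (intro allI impI)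
      fix q assume q: "q < length (init_labels bs)" "fst (init_labels bs ! q) \<noteq> LL"
      then have qn: "q < n" using li by simp
      have nb: "w!q \<notin> block_ends bs"
      proof
        assume "w!q \<in> block_ends bs"
        then have "letter_of bs (w!q) = LL" unfolding letter_of_def by simp
        then show False using q(2) ni[OF qn] by simp
      qed
      have "(fst (init_labels bs ! q) = LH) \<longleftrightarrow> is_increase bs (w!q)"
        using ni[OF qn] nb unfolding letter_of_def by simp
      also have "\<dots> \<longleftrightarrow> (\<exists>p' q'. p' < q' \<and> q' < length w \<and> w!p' = w!q \<and> w!q' = Suc (w!q))"
        using nb unfolding is_increase_iff w_def by simp
      also have "\<dots> \<longleftrightarrow> (\<exists>q'. q < q' \<and> q' < n + 1 \<and> w ! q' = Suc (w!q))"
      proof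
        assume "\<exists>p' q'. p' < q' \<and> q' < length w \<and> w!p' = w!q \<and> w!q' = Suc (w!q)"
        then obtain p' q' where pq: "p' < q'" "q' < length w" "w!p' = w!q" "w!q' = Suc (w!q)" by blast
        have "p' < length w" "q < length w" using pq lw qn by auto
        then have "p' = q" using nth_eq_iff_index_eq[OF dw, of p' q] pq(3) by simp
        then show "\<exists>q'. q < q' \<and> q' < n + 1 \<and> w ! q' = Suc (w!q)" using pq lw by (intro exI[of _ q']) simp
      next
        assume "\<exists>q'. q < q' \<and> q' < n + 1 \<and> w ! q' = Suc (w!q)"
        then obtain q' where q': "q < q'" "q' < n + 1" "w ! q' = Suc (w!q)" by blast
        then show "\<exists>p' q'. p' < q' \<and> q' < length w \<and> w!p' = w!q \<and> w!q' = Suc (w!q)" using lw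
          by (intro exI[of _ q] exI[of _ q']) simp
      qed
      also have "\<dots> \<longleftrightarrow> (w!q + 1 = bl \<or> (\<exists>q'. q < q' \<and> q' < n \<and> w!q' = w!q + 1))"
      proof
        assume "\<exists>q'. q < q' \<and> q' < n + 1 \<and> w ! q' = Suc (w!q)"
        then obtain q' where "q < q'" "q' < n + 1" "w ! q' = Suc (w!q)" by blast
        then show "w!q + 1 = bl \<or> (\<exists>q'. q < q' \<and> q' < n \<and> w!q' = w!q + 1)"
          using wn by (cases "q' = n") auto
      next
        assume "w!q + 1 = bl \<or> (\<exists>q'. q < q' \<and> q' < n \<and> w!q' = w!q + 1)"
        then show "\<exists>q'. q < q' \<and> q' < n + 1 \<and> w ! q' = Suc (w!q)"
        proof
          assume "w!q + 1 = bl" then show ?thesis using wn qn by (intro exI[of _ n]) simp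
        next
          assume "\<exists>q'. q < q' \<and> q' < n \<and> w!q' = w!q + 1"
          then obtain q' where "q < q'" "q' < n" "w!q' = w!q + 1" by blast
          then show ?thesis by (intro exI[of _ q']) simp
        qed
      qed
      also have "\<dots> \<longleftrightarrow> (Max (snd (init_labels bs ! q)) + 1 = bl \<or> (\<exists>q'>q. q' < length (init_labels bs) \<and> Max (snd (init_labels bs ! q)) + 1 \<in> snd (init_labels bs ! q')))"
      proof -
        have m: "Max (snd (init_labels bs ! q)) = w!q" using ni[OF qn] by simp
        have ex: "(\<exists>q'>q. q' < length (init_labels bs) \<and> w!q + 1 \<in> snd (init_labels bs ! q')) \<longleftrightarrow> (\<exists>q'. q < q' \<and> q' < n \<and> w!q' = w!q + 1)"
        proof
          assume "\<exists>q'>q. q' < length (init_labels bs) \<and> w!q + 1 \<in> snd (init_labels bs ! q')"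
          then obtain q' where h: "q < q'" "q' < n" "w!q + 1 \<in> snd (init_labels bs ! q')" using li by auto
          then have "w!q' = w!q + 1" using ni[OF h(2)] by simp
          then show "\<exists>q'. q < q' \<and> q' < n \<and> w!q' = w!q + 1" using h by blast
        next
          assume "\<exists>q'. q < q' \<and> q' < n \<and> w!q' = w!q + 1"
          then obtain q' where h: "q < q'" "q' < n" "w!q' = w!q + 1" by blast
          then have "w!q + 1 \<in> snd (init_labels bs ! q')" using ni[OF h(2)] by simp
          then show "\<exists>q'>q. q' < length (init_labels bs) \<and> w!q + 1 \<in> snd (init_labels bs ! q')" using h li by blast
        qed
        show ?thesis unfolding m using ex by simp
      qed
      finally show "(fst (init_labels bs ! q) = LH) = (Max (snd (init_labels bs ! q)) + 1 = bl \<or> (\<exists>q'>q. q' < length (init_labels bs) \<and> Max (snd (init_labels bs ! q)) + 1 \<in> snd (init_labels bs ! q')))" .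
    qed
    show "b1 \<noteq> bl \<longrightarrow> (\<exists>q<length (init_labels bs). fst (init_labels bs ! q) = LL \<and> b1 \<in> snd (init_labels bs ! q))"
    proof
      assume ne: "b1 \<noteq> bl"
      obtain p where p: "p < length w" "w ! p = b1" using be_in[OF b1_be] by (auto simp: in_set_conv_nth)
      have "p \<noteq> n" using p wn ne by auto
      then have pn: "p < n" using p lw by simp
      then show "\<exists>q<length (init_labels bs). fst (init_labels bs ! q) = LL \<and> b1 \<in> snd (init_labels bs ! q)"
        using ni[OF pn] p b1_be li unfolding letter_of_def by (intro exI[of _ p]) auto
    qed
    show "lrsL b1 (maxw (init_labels bs)) = lrs bs" by (rule lrs_eq)
    show "rlsL bl (maxw (init_labels bs)) = rls bs" by (rule rls_eq)
  qed
  show "bmin bs \<le> bmax bs" using blb unfolding bl_def b1_def .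
  show "bmin bs \<le> n + 1" using bln unfolding bl_def by simp
  show "map fst (init_labels bs) = Xword bs" using mfst X_def by simp
  show "cnt LZ (init_labels bs) = nletters LZ (Xword bs)" using cntX X_def by simp
  show "cnt LH (init_labels bs) = nletters LH (Xword bs)" using cntX X_def by simp
  have dml: "distinct (map last bs)" using sw_distinct[OF srt] .
  have cbe: "card (block_ends bs) = r + 1" unfolding BE using distinct_card[OF dml] lenbs by simp
  have dbw: "distinct (butlast w)" using dw by (simp add: distinct_butlast)
  have "nletters LL X = length (filter (\<lambda>x. x \<in> block_ends bs) (butlast w))"
    unfolding nletters_def X by (simp add: filter_map comp_def letter_of_def)
  also have "\<dots> = card ({x. x \<in> block_ends bs} \<inter> set (butlast w))" using distinct_length_filter[OF dbw] .
  also have "{x. x \<in> block_ends bs} \<inter> set (butlast w) = block_ends bs - {bl}"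
    using butlast_set_distinct[OF dw wne] blw be_in by auto
  also have "card (block_ends bs - {bl}) = r" using cbe bl_be
    by (simp add: card_Diff_singleton_if)
  finally have "nletters LL X = r" .
  then show "nletters LH (Xword bs) + nletters LZ (Xword bs) = n - r"
    using three_letters[of X] lX X_def by simp
qed



theorem theorem3p2:
  fixes n r i j :: nat and bs :: "nat list list" and ps :: "nat list"
    and \<alpha> \<beta> :: "'a::comm_semiring_1"
  assumes "r \<le> n"
    and "bs \<in> assemblees (n + 1) (r + 1)"
    and "card (lrs bs) = i" and "card (rls bs) = j"
    and "tiling_seq (Xword bs) ps"
  shows "wt \<alpha> \<beta> 1 (Xword bs) (fe_fill (init_labels bs) ps) = \<alpha> ^ (n - r - i) * \<beta> ^ (n - r - j)"
proof -
  note F = init_facts[OF assms(1,2)]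
  have ts: "tiling_seq (map fst (init_labels bs)) ps" using F(4) assms(5) by simp
  obtain stf where stf: "Inv n (bmin bs) (bmax bs) (lrs bs) (rls bs) stf" "map fst stf = nw_word (map fst stf)"
    "cnt LZ (init_labels bs) = cnt LZ stf + nsym SAlpha (fe_fill (init_labels bs) ps)"
    "cnt LH (init_labels bs) = cnt LH stf + nsym SBeta (fe_fill (init_labels bs) ps)"
    using run_lemma[OF F(1,2,3) ts] by blast
  have fc: "cnt LZ stf = i" "cnt LH stf = j"
    using final_counts[OF stf(1) F(2,3) stf(2)] assms(3,4) by auto
  define T where "T = fe_fill (init_labels bs) ps"
  define k where "k = nletters LH (Xword bs)"
  define l where "l = nletters LZ (Xword bs)"
  have A: "l = i + nsym SAlpha T" using stf(3) F(5) fc unfolding T_def l_def by simp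
  have B: "k = j + nsym SBeta T" using stf(4) F(6) fc unfolding T_def k_def by simp
  have kl: "k + l = n - r" using F(7) unfolding k_def l_def .
  have e1: "n - r - i = k + nsym SAlpha T" using A kl by linarith
  have e2: "n - r - j = l + nsym SBeta T" using B kl by linarith
  have "wt \<alpha> \<beta> 1 (Xword bs) T = \<alpha> ^ k * \<beta> ^ l * (\<alpha> ^ nsym SAlpha T * \<beta> ^ nsym SBeta T)"
    unfolding wt_def prod_sym k_def l_def ..
  also have "\<dots> = \<alpha> ^ (k + nsym SAlpha T) * \<beta> ^ (l + nsym SBeta T)"
    by (simp add: power_add ac_simps)
  finally show ?thesis unfolding T_def e1 e2 .
qed


end
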